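(* Let $0<\epsilon\le\beta<\tfrac12$ and $b>0$. Let $\widehat Q_4$ be the estimator $$\widehat Q_4=\frac1n\sum_{i=1}^n\Big[(X_i^2-\sigma^2)(Y_i^2-\sigma^2)\mathbb 1\big(X_i^2\vee Y_i^2>\sigma^2\tau_n\big)-\eta\Big],\qquad \eta=E_{(0,0)}\big[(X_i^2-\sigma^2)(Y_i^2-\sigma^2)\mathbb 1(X_i^2\vee Y_i^2>\sigma^2\tau_n)\big],$$ with $\tau_n=4\log n$, where $E_{(0,0)}$ denotes expectation when $\mu_i=\theta_i=0$. Then there is a constant $C>0$ (depending only on $\beta,\epsilon,b,\sigma$) such that for all sufficiently large $n$, $$\sup_{(\mu,\theta)\in\Omega(\beta,\epsilon,b)}E_{(\mu,\theta)}\big(\widehat Q_4-Q(\mu,\theta)\big)^2\le C\max\Big\{n^{2\epsilon-2}(\log n)^4,\;n^{\epsilon+6b-2},\;n^{\beta+4b-2}\Big\}.$$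
   Context: Gaussian two-sequence model: one observes $X_i=\mu_i+\sigma z_i'$, $Y_i=\theta_i+\sigma z_i$, $i=1,\dots,n$, where $z_1',\dots,z_n',z_1,\dots,z_n$ are i.i.d. $N(0,1)$ and the noise level $\sigma>0$ is known. The target functional is $Q(\mu,\theta)=\frac1n\sum_{i=1}^n\mu_i^2\theta_i^2$. $a\vee b=\max\{a,b\}$. For vectors, $\|\mu\|_0$ is the number of nonzero entries, $\|\mu\|_\infty=\max_i|\mu_i|$, and $\mu\star\theta=(\mu_1\theta_1,\dots,\mu_n\theta_n)$. With $k_n=n^\beta$, $q_n=n^\epsilon$, $s_n=n^b$ (where $0<\epsilon\le\beta<\tfrac12$, $b\in\mathbb R$), the parameter space is $$\Omega(\beta,\epsilon,b)=\{(\mu,\theta)\in\mathbb R^n\times\mathbb R^n:\|\mu\|_0\le k_n,\|\mu\|_\infty\le s_n,\|\theta\|_0\le k_n,\|\theta\|_\infty\le s_n,\|\mu\star\theta\|_0\le q_n\}.$$ *)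

theory Defs
  imports "HOL-Probability.Probability"
begin

definition gauss_pair :: "real \<Rightarrow> real \<Rightarrow> real \<Rightarrow> (real \<times> real) measure" where
  "gauss_pair m t \<sigma> =
     density lborel (normal_density m \<sigma>) \<Otimes>\<^sub>M density lborel (normal_density t \<sigma>)"

definition sample_law :: "nat \<Rightarrow> (nat \<Rightarrow> real) \<Rightarrow> (nat \<Rightarrow> real) \<Rightarrow> real \<Rightarrow> (nat \<Rightarrow> real \<times> real) measure" where
  "sample_law n \<mu> \<theta> \<sigma> = PiM {..<n} (\<lambda>i. gauss_pair (\<mu> i) (\<theta> i) \<sigma>)"

definition tau :: "nat \<Rightarrow> real" where
  "tau n = 4 * ln (real n)"

definition thr_term :: "nat \<Rightarrow> real \<Rightarrow> real \<times> real \<Rightarrow> real" where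
  "thr_term n \<sigma> p = (fst p ^ 2 - \<sigma> ^ 2) * (snd p ^ 2 - \<sigma> ^ 2) *
     (if max (fst p ^ 2) (snd p ^ 2) > \<sigma> ^ 2 * tau n then 1 else 0)"

definition eta :: "nat \<Rightarrow> real \<Rightarrow> real" where
  "eta n \<sigma> = integral\<^sup>L (gauss_pair 0 0 \<sigma>) (thr_term n \<sigma>)"

definition Q4hat :: "nat \<Rightarrow> real \<Rightarrow> (nat \<Rightarrow> real \<times> real) \<Rightarrow> real" where
  "Q4hat n \<sigma> \<omega> = (1 / real n) * (\<Sum>i<n. thr_term n \<sigma> (\<omega> i) - eta n \<sigma>)"

definition Qfun :: "nat \<Rightarrow> (nat \<Rightarrow> real) \<Rightarrow> (nat \<Rightarrow> real) \<Rightarrow> real" where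
  "Qfun n \<mu> \<theta> = (1 / real n) * (\<Sum>i<n. (\<mu> i)^2 * (\<theta> i)^2)"

definition Omega :: "nat \<Rightarrow> real \<Rightarrow> real \<Rightarrow> real \<Rightarrow> ((nat \<Rightarrow> real) \<times> (nat \<Rightarrow> real)) set" where
  "Omega n \<beta> \<epsilon> b = {(\<mu>, \<theta>).
     real (card {i. i < n \<and> \<mu> i \<noteq> 0}) \<le> real n powr \<beta> \<and>
     (\<forall>i<n. \<bar>\<mu> i\<bar> \<le> real n powr b) \<and>
     real (card {i. i < n \<and> \<theta> i \<noteq> 0}) \<le> real n powr \<beta> \<and>
     (\<forall>i<n. \<bar>\<theta> i\<bar> \<le> real n powr b) \<and>
     real (card {i. i < n \<and> \<mu> i * \<theta> i \<noteq> 0}) \<le> real n powr \<epsilon>}"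

end

theory Submission
  imports Defs
begin

lemma poly4_int:
  fixes m \<sigma> c0 c1 c2 c3 c4 :: real
  assumes s: "0 < \<sigma>"
  shows "has_bochner_integral lborel (\<lambda>x. normal_density m \<sigma> x *
      (c0 + c1*(x-m) + c2*(x-m)^2 + c3*(x-m)^3 + c4*(x-m)^4)) (c0 + c2*\<sigma>^2 + 3*c4*\<sigma>^4)"
proof -
  have e0: "has_bochner_integral lborel (\<lambda>x. normal_density m \<sigma> x * (x - m) ^ (2 * 0)) 1"
    using normal_moment_even[OF s, of m 0] by simp
  have e1: "has_bochner_integral lborel (\<lambda>x. normal_density m \<sigma> x * (x - m) ^ (2 * 1)) (\<sigma>^2)"
    using normal_moment_even[OF s, of m 1] s by (simp add: field_simps)
  have e2: "has_bochner_integral lborel (\<lambda>x. normal_density m \<sigma> x * (x - m) ^ (2 * 2)) (3*\<sigma>^4)"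
    using normal_moment_even[OF s, of m 2] s by (simp add: field_simps fact_numeral power2_eq_square power4_eq_xxxx)
  have o0: "has_bochner_integral lborel (\<lambda>x. normal_density m \<sigma> x * (x - m) ^ (2 * 0 + 1)) 0"
    using normal_moment_odd[OF s, of m 0] by simp
  have o1: "has_bochner_integral lborel (\<lambda>x. normal_density m \<sigma> x * (x - m) ^ (2 * 1 + 1)) 0"
    using normal_moment_odd[OF s, of m 1] by simp
  have "has_bochner_integral lborel (\<lambda>x. c0 * (normal_density m \<sigma> x * (x - m) ^ (2 * 0))
     + c1 * (normal_density m \<sigma> x * (x - m) ^ (2 * 0 + 1))
     + c2 * (normal_density m \<sigma> x * (x - m) ^ (2 * 1))
     + c3 * (normal_density m \<sigma> x * (x - m) ^ (2 * 1 + 1))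
     + c4 * (normal_density m \<sigma> x * (x - m) ^ (2 * 2)))
     (c0 * 1 + c1 * 0 + c2 * \<sigma>^2 + c3 * 0 + c4 * (3*\<sigma>^4))"
    by (intro has_bochner_integral_add has_bochner_integral_mult_right e0 e1 e2 o0 o1)
  moreover have "(\<lambda>x. c0 * (normal_density m \<sigma> x * (x - m) ^ (2 * 0))
     + c1 * (normal_density m \<sigma> x * (x - m) ^ (2 * 0 + 1))
     + c2 * (normal_density m \<sigma> x * (x - m) ^ (2 * 1))
     + c3 * (normal_density m \<sigma> x * (x - m) ^ (2 * 1 + 1))
     + c4 * (normal_density m \<sigma> x * (x - m) ^ (2 * 2))) = (\<lambda>x. normal_density m \<sigma> x *
      (c0 + c1*(x-m) + c2*(x-m)^2 + c3*(x-m)^3 + c4*(x-m)^4))"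
    by (rule ext) (simp add: distrib_left)
  ultimately show ?thesis
    by (simp add: ac_simps)
qed

lemma hbi_eq:
  assumes "has_bochner_integral M f v" "\<And>x. f x = g x" "v = w"
  shows "has_bochner_integral M g w"
proof -
  have "f = g" using assms(2) by (rule ext)
  with assms show ?thesis by simp
qed

abbreviation Nd :: "real \<Rightarrow> real \<Rightarrow> real measure" where
  "Nd m \<sigma> \<equiv> density lborel (normal_density m \<sigma>)"

lemma hbi_Nd:
  assumes "has_bochner_integral lborel (\<lambda>x. normal_density m \<sigma> x * f x) v"
    and [measurable]: "f \<in> borel_measurable borel"
  shows "has_bochner_integral (Nd m \<sigma>) f v"
  by (rule has_bochner_integral_density) (use assms in auto)

lemma Nd_A:
  assumes s: "0 < \<sigma>"
  shows "has_bochner_integral (Nd m \<sigma>) (\<lambda>x. x^2 - \<sigma>^2) (m^2)"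
proof (rule hbi_Nd)
  have "has_bochner_integral lborel (\<lambda>x. normal_density m \<sigma> x *
      ((m^2-\<sigma>^2) + (2*m)*(x-m) + 1*(x-m)^2 + 0*(x-m)^3 + 0*(x-m)^4)) ((m^2-\<sigma>^2) + 1*\<sigma>^2 + 3*0*\<sigma>^4)"
    by (rule poly4_int[OF s])
  then show "has_bochner_integral lborel (\<lambda>x. normal_density m \<sigma> x * (x^2 - \<sigma>^2)) (m^2)"
    by (rule hbi_eq) (simp_all add: power2_eq_square algebra_simps)
qed simp

lemma Nd_A2:
  assumes s: "0 < \<sigma>"
  shows "has_bochner_integral (Nd m \<sigma>) (\<lambda>x. (x^2 - \<sigma>^2)^2) (m^4 + 4*m^2*\<sigma>^2 + 2*\<sigma>^4)"
proof (rule hbi_Nd)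
  have "has_bochner_integral lborel (\<lambda>x. normal_density m \<sigma> x *
      ((m^2-\<sigma>^2)^2 + (4*m*(m^2-\<sigma>^2))*(x-m) + (6*m^2 - 2*\<sigma>^2)*(x-m)^2 + (4*m)*(x-m)^3 + 1*(x-m)^4))
       ((m^2-\<sigma>^2)^2 + (6*m^2 - 2*\<sigma>^2)*\<sigma>^2 + 3*1*\<sigma>^4)"
    by (rule poly4_int[OF s])
  then show "has_bochner_integral lborel (\<lambda>x. normal_density m \<sigma> x * (x^2 - \<sigma>^2)^2) (m^4 + 4*m^2*\<sigma>^2 + 2*\<sigma>^4)"
    by (rule hbi_eq) (simp_all add: power2_eq_square power3_eq_cube power4_eq_xxxx algebra_simps)
qed simp

lemma tilt_density:
  assumes s: "0 < \<sigma>"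
  shows "normal_density 0 \<sigma> x * exp (x^2 / (4*\<sigma>^2)) = sqrt 2 * normal_density 0 (sqrt 2 * \<sigma>) x"
proof -
  have "exp (- x\<^sup>2 / (2 * \<sigma>\<^sup>2)) * exp (x^2 / (4*\<sigma>^2)) = exp (- x\<^sup>2 / (2 * (sqrt 2 * \<sigma>)\<^sup>2))"
    unfolding exp_add[symmetric] using s by (simp add: power_mult_distrib field_simps)
  moreover have "1 / sqrt (2 * pi * \<sigma>\<^sup>2) = sqrt 2 * (1 / sqrt (2 * pi * (sqrt 2 * \<sigma>)\<^sup>2))"
    using s by (simp add: power_mult_distrib real_sqrt_mult field_simps)
  ultimately show ?thesis
    unfolding normal_density_def by (simp add: ac_simps)
qed

lemma Nd_tilt:
  assumes s: "0 < \<sigma>"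
  shows "has_bochner_integral (Nd 0 \<sigma>) (\<lambda>x. ((x^2 - \<sigma>^2)^2 + 1) * exp (x^2 / (4*\<sigma>^2))) (sqrt 2 * (9*\<sigma>^4 + 1))"
proof (rule hbi_Nd)
  have s2: "0 < sqrt 2 * \<sigma>" using s by simp
  have "has_bochner_integral lborel (\<lambda>x. normal_density 0 (sqrt 2 * \<sigma>) x *
      ((\<sigma>^4+1) + 0*(x-0) + (-2*\<sigma>^2)*(x-0)^2 + 0*(x-0)^3 + 1*(x-0)^4))
       ((\<sigma>^4+1) + (-2*\<sigma>^2)*(sqrt 2 * \<sigma>)^2 + 3*1*(sqrt 2 * \<sigma>)^4)"
    by (rule poly4_int[OF s2])
  then have hb: "has_bochner_integral lborel (\<lambda>x. sqrt 2 * (normal_density 0 (sqrt 2 * \<sigma>) x *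
      ((\<sigma>^4+1) + 0*(x-0) + (-2*\<sigma>^2)*(x-0)^2 + 0*(x-0)^3 + 1*(x-0)^4)))
       (sqrt 2 * ((\<sigma>^4+1) + (-2*\<sigma>^2)*(sqrt 2 * \<sigma>)^2 + 3*1*(sqrt 2 * \<sigma>)^4))"
    by (rule has_bochner_integral_mult_right)
  have eq: "\<And>x::real. sqrt 2 * (normal_density 0 (sqrt 2 * \<sigma>) x *
      ((\<sigma>^4+1) + 0*(x-0) + (-2*\<sigma>^2)*(x-0)^2 + 0*(x-0)^3 + 1*(x-0)^4)) =
      normal_density 0 \<sigma> x * (((x^2 - \<sigma>^2)^2 + 1) * exp (x^2 / (4*\<sigma>^2)))"
  proof -
    fix x :: real
    have "normal_density 0 \<sigma> x * (((x^2 - \<sigma>^2)^2 + 1) * exp (x^2 / (4*\<sigma>^2))) =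
       (normal_density 0 \<sigma> x * exp (x^2 / (4*\<sigma>^2))) * ((x^2 - \<sigma>^2)^2 + 1)" by simp
    also have "\<dots> = sqrt 2 * normal_density 0 (sqrt 2 * \<sigma>) x * ((x^2 - \<sigma>^2)^2 + 1)"
      using tilt_density[OF s] by simp
    finally show "sqrt 2 * (normal_density 0 (sqrt 2 * \<sigma>) x *
      ((\<sigma>^4+1) + 0*(x-0) + (-2*\<sigma>^2)*(x-0)^2 + 0*(x-0)^3 + 1*(x-0)^4)) =
      normal_density 0 \<sigma> x * (((x^2 - \<sigma>^2)^2 + 1) * exp (x^2 / (4*\<sigma>^2)))"
      by (simp add: power2_eq_square power4_eq_xxxx algebra_simps)
  qed
  have eq2: "sqrt 2 * ((\<sigma>^4+1) + (-2*\<sigma>^2)*(sqrt 2 * \<sigma>)^2 + 3*1*(sqrt 2 * \<sigma>)^4) = sqrt 2 * (9*\<sigma>^4 + 1)"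
    by (simp add: power_mult_distrib power4_eq_xxxx power2_eq_square algebra_simps)
  show "has_bochner_integral lborel (\<lambda>x. normal_density 0 \<sigma> x * (((x^2 - \<sigma>^2)^2 + 1) * exp (x^2 / (4*\<sigma>^2)))) (sqrt 2 * (9*\<sigma>^4 + 1))"
    by (rule hbi_eq[OF hb eq eq2])
qed simp

lemma pair_prod:
  fixes f g :: "real \<Rightarrow> real"
  assumes p1: "prob_space M1" and p2: "prob_space M2" and f: "integrable M1 f" and g: "integrable M2 g"
  shows "integrable (M1 \<Otimes>\<^sub>M M2) (\<lambda>p. f (fst p) * g (snd p))"
    and "integral\<^sup>L (M1 \<Otimes>\<^sub>M M2) (\<lambda>p. f (fst p) * g (snd p)) = integral\<^sup>L M1 f * integral\<^sup>L M2 g"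
proof -
  interpret P: pair_prob_space M1 M2
    by (simp add: pair_prob_space_def pair_sigma_finite_def prob_space_imp_sigma_finite p1 p2)
  have [measurable]: "f \<in> borel_measurable M1" "g \<in> borel_measurable M2"
    using f g by auto
  show int: "integrable (M1 \<Otimes>\<^sub>M M2) (\<lambda>p. f (fst p) * g (snd p))"
  proof (rule P.Fubini_integrable)
    show "(\<lambda>p. f (fst p) * g (snd p)) \<in> borel_measurable (M1 \<Otimes>\<^sub>M M2)" by measurable
    have "integrable M1 (\<lambda>x. norm (f x) * (\<integral>y. norm (g y) \<partial>M2))"
      using f by (intro integrable_mult_left) auto
    then show "integrable M1 (\<lambda>x. \<integral>y. norm (f (fst (x, y)) * g (snd (x, y))) \<partial>M2)"
      by (simp add: abs_mult)
    show "AE x in M1. integrable M2 (\<lambda>y. f (fst (x, y)) * g (snd (x, y)))"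
      using g by auto
  qed
  have "integral\<^sup>L (M1 \<Otimes>\<^sub>M M2) (\<lambda>p. f (fst p) * g (snd p)) = (\<integral>x. (\<integral>y. f x * g y \<partial>M2) \<partial>M1)"
    using P.integral_fst'[OF int] by simp
  also have "\<dots> = (\<integral>x. f x * integral\<^sup>L M2 g \<partial>M1)" by simp
  also have "\<dots> = integral\<^sup>L M1 f * integral\<^sup>L M2 g" by simp
  finally show "integral\<^sup>L (M1 \<Otimes>\<^sub>M M2) (\<lambda>p. f (fst p) * g (snd p)) = integral\<^sup>L M1 f * integral\<^sup>L M2 g" .
qed

definition Af :: "real \<Rightarrow> real \<Rightarrow> real" where "Af \<sigma> x = x^2 - \<sigma>^2"
definition ind :: "nat \<Rightarrow> real \<Rightarrow> real \<Rightarrow> real" where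
  "ind n \<sigma> x = (if x^2 \<le> \<sigma>^2 * tau n then 1 else 0)"

lemma meas_Af[measurable]: "Af \<sigma> \<in> borel_measurable borel"
  unfolding Af_def by measurable
lemma meas_ind[measurable]: "ind n \<sigma> \<in> borel_measurable borel"
  unfolding ind_def by measurable

lemma thr_decomp: "thr_term n \<sigma> p = Af \<sigma> (fst p) * Af \<sigma> (snd p) * (1 - ind n \<sigma> (fst p) * ind n \<sigma> (snd p))"
  unfolding thr_term_def Af_def ind_def by auto

lemma ind_01: "ind n \<sigma> x = 0 \<or> ind n \<sigma> x = 1"
  unfolding ind_def by auto

lemma tau_nonneg: "0 < n \<Longrightarrow> 0 \<le> tau n"
  unfolding tau_def by simp

lemma Af_ind_bound:
  assumes "0 < n"
  shows "\<bar>Af \<sigma> x * ind n \<sigma> x\<bar> \<le> \<sigma>^2 * (tau n + 1)"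
proof (cases "x^2 \<le> \<sigma>^2 * tau n")
  case True
  have "0 \<le> \<sigma>^2 * tau n" using tau_nonneg[OF assms] by simp
  moreover have "0 \<le> \<sigma>^2" "0 \<le> x^2" by simp_all
  moreover have "\<sigma>^2 * (tau n + 1) = \<sigma>^2 * tau n + \<sigma>^2" by (simp add: algebra_simps)
  ultimately have "\<bar>x^2 - \<sigma>^2\<bar> \<le> \<sigma>^2 * (tau n + 1)" using True
    unfolding abs_le_iff by linarith
  then show ?thesis using True by (simp add: Af_def ind_def)
next
  case False
  have "0 \<le> \<sigma>^2 * (tau n + 1)" using tau_nonneg[OF assms] by simp
  then show ?thesis using False by (simp add: ind_def)
qed

lemma abs_le_sq1: "\<bar>a::real\<bar> \<le> a^2 + 1"
proof -
  have "0 \<le> (\<bar>a\<bar> - 1)^2" by simp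
  also have "(\<bar>a\<bar> - 1)^2 = a^2 - 2*\<bar>a\<bar> + 1"
    by (simp add: power2_eq_square algebra_simps)
  finally show ?thesis by simp
qed

lemma tail_bound:
  assumes s: "0 < \<sigma>" and n: "0 < n"
  shows "(Af \<sigma> x)^2 * (1 - ind n \<sigma> x) \<le> ((x^2 - \<sigma>^2)^2 + 1) * exp (x^2 / (4*\<sigma>^2)) / real n"
    and "\<bar>Af \<sigma> x\<bar> * (1 - ind n \<sigma> x) \<le> ((x^2 - \<sigma>^2)^2 + 1) * exp (x^2 / (4*\<sigma>^2)) / real n"
proof -
  have g0: "0 \<le> ((x^2 - \<sigma>^2)^2 + 1) * exp (x^2 / (4*\<sigma>^2)) / real n" by simp
  have main: "(1 - ind n \<sigma> x) * ((x^2 - \<sigma>^2)^2 + 1) \<le> ((x^2 - \<sigma>^2)^2 + 1) * exp (x^2 / (4*\<sigma>^2)) / real n"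
  proof (cases "x^2 \<le> \<sigma>^2 * tau n")
    case True then show ?thesis using g0 by (simp add: ind_def)
  next
    case False
    then have "\<sigma>^2 * (4 * ln (real n)) < x^2" by (simp add: tau_def)
    then have "ln (real n) < x^2 / (4*\<sigma>^2)" using s by (simp add: field_simps)
    then have "exp (ln (real n)) < exp (x^2 / (4*\<sigma>^2))" by simp
    then have "real n < exp (x^2 / (4*\<sigma>^2))" using n by simp
    then have "1 \<le> exp (x^2 / (4*\<sigma>^2)) / real n" using n by simp
    then have "((x^2 - \<sigma>^2)^2 + 1) * 1 \<le> ((x^2 - \<sigma>^2)^2 + 1) * (exp (x^2 / (4*\<sigma>^2)) / real n)"
      by (intro mult_left_mono) auto
    then show ?thesis using False by (simp add: ind_def)
  qed
  have i01: "0 \<le> 1 - ind n \<sigma> x" using ind_01[of n \<sigma> x] by auto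
  have "(Af \<sigma> x)^2 \<le> (x^2 - \<sigma>^2)^2 + 1" by (simp add: Af_def)
  then have "(1 - ind n \<sigma> x) * (Af \<sigma> x)^2 \<le> (1 - ind n \<sigma> x) * ((x^2 - \<sigma>^2)^2 + 1)"
    using i01 by (rule mult_left_mono)
  then have "(Af \<sigma> x)^2 * (1 - ind n \<sigma> x) \<le> (1 - ind n \<sigma> x) * ((x^2 - \<sigma>^2)^2 + 1)"
    by (simp add: mult.commute)
  then show "(Af \<sigma> x)^2 * (1 - ind n \<sigma> x) \<le> ((x^2 - \<sigma>^2)^2 + 1) * exp (x^2 / (4*\<sigma>^2)) / real n"
    using main by linarith
  have "\<bar>Af \<sigma> x\<bar> \<le> (x^2 - \<sigma>^2)^2 + 1" unfolding Af_def
    by (rule abs_le_sq1)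
  then have "(1 - ind n \<sigma> x) * \<bar>Af \<sigma> x\<bar> \<le> (1 - ind n \<sigma> x) * ((x^2 - \<sigma>^2)^2 + 1)"
    using i01 by (rule mult_left_mono)
  then have "\<bar>Af \<sigma> x\<bar> * (1 - ind n \<sigma> x) \<le> (1 - ind n \<sigma> x) * ((x^2 - \<sigma>^2)^2 + 1)"
    by (simp add: mult.commute)
  then show "\<bar>Af \<sigma> x\<bar> * (1 - ind n \<sigma> x) \<le> ((x^2 - \<sigma>^2)^2 + 1) * exp (x^2 / (4*\<sigma>^2)) / real n"
    using main by linarith
qed

lemma abs_int_le:
  fixes f g :: "'a \<Rightarrow> real"
  assumes "integrable M g" "\<And>x. x \<in> space M \<Longrightarrow> \<bar>f x\<bar> \<le> g x"
  shows "\<bar>integral\<^sup>L M f\<bar> \<le> integral\<^sup>L M g"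
proof -
  have "integral\<^sup>L M (\<lambda>x. \<bar>f x\<bar>) \<le> integral\<^sup>L M g"
    by (rule integral_mono') (use assms in \<open>auto intro: order_trans[OF abs_ge_zero]\<close>)
  then show ?thesis using integral_abs_bound[of M f] by linarith
qed

context
  fixes \<sigma> :: real and n :: nat
  assumes s: "0 < \<sigma>" and n: "0 < n"
begin

lemma ps: "prob_space (Nd m \<sigma>)"
  using prob_space_normal_density[OF s] .

lemma Nd_Af: "integrable (Nd m \<sigma>) (Af \<sigma>)" "integral\<^sup>L (Nd m \<sigma>) (Af \<sigma>) = m^2"
  using Nd_A[OF s, of m] unfolding Af_def[abs_def] by (auto dest: integrable.intros has_bochner_integral_integral_eq)

lemma Nd_Af2: "integrable (Nd m \<sigma>) (\<lambda>x. (Af \<sigma> x)^2)"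
    "integral\<^sup>L (Nd m \<sigma>) (\<lambda>x. (Af \<sigma> x)^2) = m^4 + 4*m^2*\<sigma>^2 + 2*\<sigma>^4"
  using Nd_A2[OF s, of m] unfolding Af_def[abs_def] by (auto dest: integrable.intros has_bochner_integral_integral_eq)

lemma Nd_Af_ind: "integrable (Nd m \<sigma>) (\<lambda>x. Af \<sigma> x * ind n \<sigma> x)"
  by (rule Bochner_Integration.integrable_bound[OF Nd_Af(1)]) (auto simp: ind_def)

lemma Nd_Af_ind_bound: "\<bar>integral\<^sup>L (Nd m \<sigma>) (\<lambda>x. Af \<sigma> x * ind n \<sigma> x)\<bar> \<le> \<sigma>^2 * (tau n + 1)"
proof -
  interpret prob_space "Nd m \<sigma>" by (rule ps)
  have "\<bar>integral\<^sup>L (Nd m \<sigma>) (\<lambda>x. Af \<sigma> x * ind n \<sigma> x)\<bar> \<le> integral\<^sup>L (Nd m \<sigma>) (\<lambda>x. \<sigma>^2 * (tau n + 1))"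
    by (rule abs_int_le) (auto intro: Af_ind_bound[OF n])
  then show ?thesis using prob_space by simp
qed

lemma Nd_tail:
  shows "integrable (Nd 0 \<sigma>) (\<lambda>x. (Af \<sigma> x)^2 * (1 - ind n \<sigma> x))"
    "integral\<^sup>L (Nd 0 \<sigma>) (\<lambda>x. (Af \<sigma> x)^2 * (1 - ind n \<sigma> x)) \<le> sqrt 2 * (9*\<sigma>^4 + 1) / real n"
    "integrable (Nd 0 \<sigma>) (\<lambda>x. Af \<sigma> x * (1 - ind n \<sigma> x))"
    "\<bar>integral\<^sup>L (Nd 0 \<sigma>) (\<lambda>x. Af \<sigma> x * (1 - ind n \<sigma> x))\<bar> \<le> sqrt 2 * (9*\<sigma>^4 + 1) / real n"
proof -
  have hb: "has_bochner_integral (Nd 0 \<sigma>) (\<lambda>x. ((x^2 - \<sigma>^2)^2 + 1) * exp (x^2 / (4*\<sigma>^2)) / real n)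
     (sqrt 2 * (9*\<sigma>^4 + 1) / real n)"
    using has_bochner_integral_divide_zero[OF Nd_tilt[OF s]] by simp
  have gi: "integrable (Nd 0 \<sigma>) (\<lambda>x. ((x^2 - \<sigma>^2)^2 + 1) * exp (x^2 / (4*\<sigma>^2)) / real n)"
    using hb by (rule integrable.intros)
  have ge: "integral\<^sup>L (Nd 0 \<sigma>) (\<lambda>x. ((x^2 - \<sigma>^2)^2 + 1) * exp (x^2 / (4*\<sigma>^2)) / real n) = sqrt 2 * (9*\<sigma>^4 + 1) / real n"
    using hb by (rule has_bochner_integral_integral_eq)
  have i01: "\<And>x. 0 \<le> 1 - ind n \<sigma> x \<and> 1 - ind n \<sigma> x \<le> 1" using ind_01 by (metis diff_ge_0_iff_ge diff_self diff_zero order.refl zero_le_one)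
  show i1: "integrable (Nd 0 \<sigma>) (\<lambda>x. (Af \<sigma> x)^2 * (1 - ind n \<sigma> x))"
    by (rule Bochner_Integration.integrable_bound[OF gi]) (use tail_bound(1)[OF s n] i01 in \<open>auto simp: abs_mult\<close>)
  show "integral\<^sup>L (Nd 0 \<sigma>) (\<lambda>x. (Af \<sigma> x)^2 * (1 - ind n \<sigma> x)) \<le> sqrt 2 * (9*\<sigma>^4 + 1) / real n"
    unfolding ge[symmetric] by (rule integral_mono[OF i1 gi tail_bound(1)[OF s n]])
  show i2: "integrable (Nd 0 \<sigma>) (\<lambda>x. Af \<sigma> x * (1 - ind n \<sigma> x))"
    by (rule Bochner_Integration.integrable_bound[OF gi]) (use tail_bound(2)[OF s n] i01 in \<open>auto simp: abs_mult\<close>)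
  show "\<bar>integral\<^sup>L (Nd 0 \<sigma>) (\<lambda>x. Af \<sigma> x * (1 - ind n \<sigma> x))\<bar> \<le> sqrt 2 * (9*\<sigma>^4 + 1) / real n"
    unfolding ge[symmetric] by (rule abs_int_le[OF gi]) (use tail_bound(2)[OF s n] i01 in \<open>auto simp: abs_mult\<close>)
qed

lemma Nd_a0: "\<bar>integral\<^sup>L (Nd 0 \<sigma>) (\<lambda>x. Af \<sigma> x * ind n \<sigma> x)\<bar> \<le> sqrt 2 * (9*\<sigma>^4 + 1) / real n"
proof -
  have "integral\<^sup>L (Nd 0 \<sigma>) (\<lambda>x. Af \<sigma> x * ind n \<sigma> x) =
     integral\<^sup>L (Nd 0 \<sigma>) (\<lambda>x. Af \<sigma> x - Af \<sigma> x * (1 - ind n \<sigma> x))"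
    by (simp add: algebra_simps)
  also have "\<dots> = integral\<^sup>L (Nd 0 \<sigma>) (Af \<sigma>) - integral\<^sup>L (Nd 0 \<sigma>) (\<lambda>x. Af \<sigma> x * (1 - ind n \<sigma> x))"
    by (rule Bochner_Integration.integral_diff[OF Nd_Af(1) Nd_tail(3)])
  also have "\<dots> = - integral\<^sup>L (Nd 0 \<sigma>) (\<lambda>x. Af \<sigma> x * (1 - ind n \<sigma> x))"
    using Nd_Af(2)[of 0] by simp
  finally show ?thesis using Nd_tail(4) by simp
qed

lemma meas_thr[measurable]: "thr_term n \<sigma> \<in> borel_measurable (gauss_pair m t \<sigma>)"
  unfolding thr_term_def gauss_pair_def by measurable

lemma pair_thr:
  "integrable (gauss_pair m t \<sigma>) (thr_term n \<sigma>)"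
  "integral\<^sup>L (gauss_pair m t \<sigma>) (thr_term n \<sigma>) = m^2 * t^2 -
     integral\<^sup>L (Nd m \<sigma>) (\<lambda>x. Af \<sigma> x * ind n \<sigma> x) * integral\<^sup>L (Nd t \<sigma>) (\<lambda>x. Af \<sigma> x * ind n \<sigma> x)"
proof -
  have eq: "thr_term n \<sigma> = (\<lambda>p. Af \<sigma> (fst p) * Af \<sigma> (snd p) -
      (Af \<sigma> (fst p) * ind n \<sigma> (fst p)) * (Af \<sigma> (snd p) * ind n \<sigma> (snd p)))"
    by (rule ext) (simp add: thr_decomp algebra_simps)
  note p1 = pair_prod[OF ps ps Nd_Af(1) Nd_Af(1), of m t]
  note p2 = pair_prod[OF ps ps Nd_Af_ind Nd_Af_ind, of m t]
  show "integrable (gauss_pair m t \<sigma>) (thr_term n \<sigma>)"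
    unfolding eq gauss_pair_def using p1(1) p2(1) by (rule Bochner_Integration.integrable_diff)
  show "integral\<^sup>L (gauss_pair m t \<sigma>) (thr_term n \<sigma>) = m^2 * t^2 -
     integral\<^sup>L (Nd m \<sigma>) (\<lambda>x. Af \<sigma> x * ind n \<sigma> x) * integral\<^sup>L (Nd t \<sigma>) (\<lambda>x. Af \<sigma> x * ind n \<sigma> x)"
    unfolding eq gauss_pair_def
    by (subst Bochner_Integration.integral_diff[OF p1(1) p2(1)]) (simp add: p1(2) p2(2) Nd_Af(2))
qed

lemma ps_pair: "prob_space (gauss_pair m t \<sigma>)"
  unfolding gauss_pair_def by (rule prob_space_pair[OF ps ps])

lemma one_minus_sq: "(1 - ind n \<sigma> x * ind n \<sigma> y)^2 \<le> 1"
    "(1 - ind n \<sigma> x * ind n \<sigma> y)^2 \<le> (1 - ind n \<sigma> x) + (1 - ind n \<sigma> y)"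
  using ind_01[of n \<sigma> x] ind_01[of n \<sigma> y] by auto

lemma pair_thr2:
  "integrable (gauss_pair m t \<sigma>) (\<lambda>p. (thr_term n \<sigma> p)^2)"
  "integral\<^sup>L (gauss_pair m t \<sigma>) (\<lambda>p. (thr_term n \<sigma> p)^2) \<le>
     (m^4 + 4*m^2*\<sigma>^2 + 2*\<sigma>^4) * (t^4 + 4*t^2*\<sigma>^2 + 2*\<sigma>^4)"
proof -
  note p3 = pair_prod[OF ps ps Nd_Af2(1) Nd_Af2(1), of m t]
  have pt: "\<And>p. (thr_term n \<sigma> p)^2 \<le> (Af \<sigma> (fst p))^2 * (Af \<sigma> (snd p))^2"
  proof -
    fix p :: "real \<times> real"
    have "(thr_term n \<sigma> p)^2 = (Af \<sigma> (fst p))^2 * (Af \<sigma> (snd p))^2 * (1 - ind n \<sigma> (fst p) * ind n \<sigma> (snd p))^2"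
      by (simp add: thr_decomp power_mult_distrib)
    also have "\<dots> \<le> (Af \<sigma> (fst p))^2 * (Af \<sigma> (snd p))^2 * 1"
      by (intro mult_left_mono one_minus_sq(1)) simp
    finally show "(thr_term n \<sigma> p)^2 \<le> (Af \<sigma> (fst p))^2 * (Af \<sigma> (snd p))^2" by simp
  qed
  show i: "integrable (gauss_pair m t \<sigma>) (\<lambda>p. (thr_term n \<sigma> p)^2)"
    by (rule Bochner_Integration.integrable_bound[OF p3(1)[folded gauss_pair_def]])
       (use pt in \<open>auto\<close>)
  have "integral\<^sup>L (gauss_pair m t \<sigma>) (\<lambda>p. (thr_term n \<sigma> p)^2) \<le>
     integral\<^sup>L (gauss_pair m t \<sigma>) (\<lambda>p. (Af \<sigma> (fst p))^2 * (Af \<sigma> (snd p))^2)"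
    by (rule integral_mono[OF i p3(1)[folded gauss_pair_def] pt])
  then show "integral\<^sup>L (gauss_pair m t \<sigma>) (\<lambda>p. (thr_term n \<sigma> p)^2) \<le>
     (m^4 + 4*m^2*\<sigma>^2 + 2*\<sigma>^4) * (t^4 + 4*t^2*\<sigma>^2 + 2*\<sigma>^4)"
    using p3(2) by (simp add: gauss_pair_def Nd_Af2(2))
qed

lemma pair_var:
  "integrable (gauss_pair m t \<sigma>) (\<lambda>p. (thr_term n \<sigma> p - m^2*t^2)^2)"
  "integral\<^sup>L (gauss_pair m t \<sigma>) (\<lambda>p. (thr_term n \<sigma> p - m^2*t^2)^2) \<le>
     2 * ((m^4 + 4*m^2*\<sigma>^2 + 2*\<sigma>^4) * (t^4 + 4*t^2*\<sigma>^2 + 2*\<sigma>^4) - m^4*t^4) + 2 * (\<sigma>^2 * (tau n + 1))^4"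
proof -
  interpret prob_space "gauss_pair m t \<sigma>" by (rule ps_pair)
  define c where "c = m^2*t^2"
  define K where "K = \<sigma>^2 * (tau n + 1)"
  note p1 = pair_prod[OF ps ps Nd_Af(1) Nd_Af(1), of m t, folded gauss_pair_def]
  note p3 = pair_prod[OF ps ps Nd_Af2(1) Nd_Af2(1), of m t, folded gauss_pair_def]
  have e1: "(\<lambda>p. (thr_term n \<sigma> p - c)^2) = (\<lambda>p. (thr_term n \<sigma> p)^2 - 2*c*thr_term n \<sigma> p + c^2)"
    by (rule ext) (simp add: power2_eq_square algebra_simps)
  show i: "integrable (gauss_pair m t \<sigma>) (\<lambda>p. (thr_term n \<sigma> p - m^2*t^2)^2)"
    unfolding c_def[symmetric] e1
    by (intro Bochner_Integration.integrable_add Bochner_Integration.integrable_diff pair_thr2(1)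
          integrable_mult_right pair_thr(1) integrable_const)
  define B where "B = (\<lambda>p. 2 * ((Af \<sigma> (fst p))^2 * (Af \<sigma> (snd p))^2) - 4*c*(Af \<sigma> (fst p) * Af \<sigma> (snd p)) + (2*c^2 + 2*K^4))"
  have iB: "integrable (gauss_pair m t \<sigma>) B"
    unfolding B_def
    by (intro Bochner_Integration.integrable_add Bochner_Integration.integrable_diff
          integrable_mult_right p1(1) p3(1) integrable_const)
  have eB: "integral\<^sup>L (gauss_pair m t \<sigma>) B =
     2 * ((m^4 + 4*m^2*\<sigma>^2 + 2*\<sigma>^4) * (t^4 + 4*t^2*\<sigma>^2 + 2*\<sigma>^4)) - 4*c*(m^2*t^2) + (2*c^2 + 2*K^4)"
    unfolding B_def
    by (subst Bochner_Integration.integral_add Bochner_Integration.integral_diff integral_mult_right_zero;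
        (intro Bochner_Integration.integrable_add Bochner_Integration.integrable_diff
          integrable_mult_right p1(1) p3(1) integrable_const)?)+
       (simp add: p1(2) p3(2) Nd_Af(2) Nd_Af2(2) prob_space)
  have pt: "\<And>p. (thr_term n \<sigma> p - c)^2 \<le> B p"
  proof -
    fix p :: "real \<times> real"
    define uu where "uu = Af \<sigma> (fst p) * Af \<sigma> (snd p) - c"
    define vv where "vv = (Af \<sigma> (fst p) * ind n \<sigma> (fst p)) * (Af \<sigma> (snd p) * ind n \<sigma> (snd p))"
    have tv: "thr_term n \<sigma> p - c = uu - vv"
      unfolding uu_def vv_def by (simp add: thr_decomp algebra_simps)
    have "\<bar>vv\<bar> \<le> K * K" unfolding vv_def abs_mult[of "_ * _"] K_def
      using tau_nonneg[OF n] by (intro mult_mono Af_ind_bound[OF n]) auto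
    then have v2: "vv^2 \<le> K^4"
    proof -
      have "(\<bar>vv\<bar>)^2 \<le> (K*K)^2" by (rule power_mono) (use \<open>\<bar>vv\<bar> \<le> K * K\<close> in auto)
      then show ?thesis by (simp add: power2_eq_square power4_eq_xxxx mult.assoc)
    qed
    have "(uu - vv)^2 \<le> 2 * uu^2 + 2 * vv^2"
      using zero_le_power2[of "uu+vv"] by (simp add: power2_eq_square algebra_simps)
    also have "\<dots> \<le> 2 * uu^2 + 2*K^4" using v2 by simp
    also have "2 * uu^2 + 2*K^4 = B p"
      unfolding uu_def B_def by (simp add: power2_eq_square algebra_simps)
    finally show "(thr_term n \<sigma> p - c)^2 \<le> B p" unfolding tv .
  qed
  have "integral\<^sup>L (gauss_pair m t \<sigma>) (\<lambda>p. (thr_term n \<sigma> p - c)^2) \<le> integral\<^sup>L (gauss_pair m t \<sigma>) B"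
    by (rule integral_mono[OF i[folded c_def] iB pt])
  then show "integral\<^sup>L (gauss_pair m t \<sigma>) (\<lambda>p. (thr_term n \<sigma> p - m^2*t^2)^2) \<le>
     2 * ((m^4 + 4*m^2*\<sigma>^2 + 2*\<sigma>^4) * (t^4 + 4*t^2*\<sigma>^2 + 2*\<sigma>^4) - m^4*t^4) + 2 * (\<sigma>^2 * (tau n + 1))^4"
    unfolding eB c_def[symmetric] K_def[symmetric] by (simp add: c_def power2_eq_square power4_eq_xxxx algebra_simps)
qed

lemma pair_null:
  "integral\<^sup>L (gauss_pair 0 0 \<sigma>) (\<lambda>p. (thr_term n \<sigma> p)^2) \<le> 4 * \<sigma>^4 * (sqrt 2 * (9*\<sigma>^4 + 1)) / real n"
proof -
  note q1 = pair_prod[OF ps ps Nd_tail(1) Nd_Af2(1), of 0, folded gauss_pair_def]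
  note q2 = pair_prod[OF ps ps Nd_Af2(1) Nd_tail(1), of 0, folded gauss_pair_def]
  define B where "B = (\<lambda>p. (Af \<sigma> (fst p))^2 * (1 - ind n \<sigma> (fst p)) * (Af \<sigma> (snd p))^2 +
     (Af \<sigma> (fst p))^2 * ((Af \<sigma> (snd p))^2 * (1 - ind n \<sigma> (snd p))))"
  have iB: "integrable (gauss_pair 0 0 \<sigma>) B" unfolding B_def
    by (intro Bochner_Integration.integrable_add q1(1) q2(1))
  have pt: "\<And>p. (thr_term n \<sigma> p)^2 \<le> B p"
  proof -
    fix p :: "real \<times> real"
    have "(thr_term n \<sigma> p)^2 = (Af \<sigma> (fst p))^2 * (Af \<sigma> (snd p))^2 * (1 - ind n \<sigma> (fst p) * ind n \<sigma> (snd p))^2"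
      by (simp add: thr_decomp power_mult_distrib)
    also have "\<dots> \<le> (Af \<sigma> (fst p))^2 * (Af \<sigma> (snd p))^2 * ((1 - ind n \<sigma> (fst p)) + (1 - ind n \<sigma> (snd p)))"
      by (intro mult_left_mono one_minus_sq(2)) simp
    also have "\<dots> = B p" unfolding B_def by (simp add: algebra_simps)
    finally show "(thr_term n \<sigma> p)^2 \<le> B p" .
  qed
  have "integral\<^sup>L (gauss_pair 0 0 \<sigma>) (\<lambda>p. (thr_term n \<sigma> p)^2) \<le> integral\<^sup>L (gauss_pair 0 0 \<sigma>) B"
    by (rule integral_mono[OF pair_thr2(1) iB pt])
  also have "integral\<^sup>L (gauss_pair 0 0 \<sigma>) B =
     integral\<^sup>L (Nd 0 \<sigma>) (\<lambda>x. (Af \<sigma> x)^2 * (1 - ind n \<sigma> x)) * (2*\<sigma>^4) +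
     (2*\<sigma>^4) * integral\<^sup>L (Nd 0 \<sigma>) (\<lambda>x. (Af \<sigma> x)^2 * (1 - ind n \<sigma> x))"
    unfolding B_def by (subst Bochner_Integration.integral_add[OF q1(1) q2(1)]) (simp add: q1(2) q2(2) Nd_Af2(2))
  also have "\<dots> \<le> (sqrt 2 * (9*\<sigma>^4 + 1) / real n) * (2*\<sigma>^4) + (2*\<sigma>^4) * (sqrt 2 * (9*\<sigma>^4 + 1) / real n)"
    using Nd_tail(2) by (intro add_mono mult_right_mono mult_left_mono) auto
  also have "\<dots> = 4 * \<sigma>^4 * (sqrt 2 * (9*\<sigma>^4 + 1)) / real n" by (simp add: field_simps)
  finally show ?thesis .
qed

end

lemma prod_two:
  assumes "finite I" "i \<in> I" "j \<in> I" "i \<noteq> j"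
  shows "(\<Prod>k\<in>I. (if k = i then a else if k = j then b else (1::real))) = a * b"
proof -
  have "(\<Prod>k\<in>I. (if k = i then a else if k = j then b else (1::real))) =
        a * (\<Prod>k\<in>I-{i}. (if k = i then a else if k = j then b else (1::real)))"
    using assms by (simp add: prod.remove)
  also have "(\<Prod>k\<in>I-{i}. (if k = i then a else if k = j then b else (1::real))) =
     b * (\<Prod>k\<in>I-{i}-{j}. (if k = i then a else if k = j then b else (1::real)))"
    using assms by (subst prod.remove[of _ j]) auto
  also have "(\<Prod>k\<in>I-{i}-{j}. (if k = i then a else if k = j then b else (1::real))) = 1"
    by (intro prod.neutral) auto
  finally show ?thesis by simp
qed

lemma prod_one:
  assumes "finite I" "i \<in> I"
  shows "(\<Prod>k\<in>I. (if k = i then a else (1::real))) = a"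
  using assms by (simp add: prod.delta)

lemma sum_sq_aux:
  fixes a v :: "nat \<Rightarrow> real"
  assumes "finite I"
  shows "(\<Sum>i\<in>I. \<Sum>j\<in>I. a i * a j + (if i = j then v i else 0)) = (\<Sum>i\<in>I. v i) + (\<Sum>i\<in>I. a i)^2"
  using assms by (simp add: sum.distrib power2_eq_square sum_product sum.delta)

context
  fixes M :: "nat \<Rightarrow> 'a measure" and I :: "nat set"
  assumes ps: "\<And>i. prob_space (M i)" and finI: "finite I"
begin

interpretation product_prob_space M I
  by (simp add: product_prob_space_def product_sigma_finite_def product_prob_space_axioms_def
      prob_space_imp_sigma_finite ps)

lemma PiM_two:
  fixes F G :: "'a \<Rightarrow> real"
  assumes "i \<in> I" "j \<in> I" "i \<noteq> j" "integrable (M i) F" "integrable (M j) G"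
  shows "integrable (PiM I M) (\<lambda>\<omega>. F (\<omega> i) * G (\<omega> j))"
    "integral\<^sup>L (PiM I M) (\<lambda>\<omega>. F (\<omega> i) * G (\<omega> j)) = integral\<^sup>L (M i) F * integral\<^sup>L (M j) G"
proof -
  define h where "h = (\<lambda>k. if k = i then F else if k = j then G else (\<lambda>_. 1::real))"
  have hi: "\<And>k. k \<in> I \<Longrightarrow> integrable (M k) (h k)"
    using assms by (auto simp: h_def prob_space.prob_space[OF ps])
  have eq: "\<And>\<omega>. (\<Prod>k\<in>I. h k (\<omega> k)) = F (\<omega> i) * G (\<omega> j)"
  proof -
    fix \<omega> :: "nat \<Rightarrow> 'a"
    have "(\<Prod>k\<in>I. h k (\<omega> k)) = (\<Prod>k\<in>I. (if k = i then F (\<omega> i) else if k = j then G (\<omega> j) else (1::real)))"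
      by (intro prod.cong) (auto simp: h_def prob_space.prob_space[OF ps])
    also have "\<dots> = F (\<omega> i) * G (\<omega> j)" using assms finI by (intro prod_two) auto
    finally show "(\<Prod>k\<in>I. h k (\<omega> k)) = F (\<omega> i) * G (\<omega> j)" .
  qed
  show "integrable (PiM I M) (\<lambda>\<omega>. F (\<omega> i) * G (\<omega> j))"
    using product_integrable_prod[OF finI hi] by (simp add: eq)
  have "(\<Prod>k\<in>I. integral\<^sup>L (M k) (h k)) = (\<Prod>k\<in>I. (if k = i then integral\<^sup>L (M i) F else if k = j then integral\<^sup>L (M j) G else (1::real)))"
    by (intro prod.cong) (auto simp: h_def prob_space.prob_space[OF ps])
  also have "\<dots> = integral\<^sup>L (M i) F * integral\<^sup>L (M j) G" using assms finI by (intro prod_two) auto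
  finally show "integral\<^sup>L (PiM I M) (\<lambda>\<omega>. F (\<omega> i) * G (\<omega> j)) = integral\<^sup>L (M i) F * integral\<^sup>L (M j) G"
    using product_integral_prod[OF finI hi] by (simp add: eq)
qed

lemma PiM_one:
  fixes F :: "'a \<Rightarrow> real"
  assumes "i \<in> I" "integrable (M i) F"
  shows "integrable (PiM I M) (\<lambda>\<omega>. F (\<omega> i))"
    "integral\<^sup>L (PiM I M) (\<lambda>\<omega>. F (\<omega> i)) = integral\<^sup>L (M i) F"
proof -
  define h where "h = (\<lambda>k. if k = i then F else (\<lambda>_. 1::real))"
  have hi: "\<And>k. k \<in> I \<Longrightarrow> integrable (M k) (h k)"
    using assms by (auto simp: h_def prob_space.prob_space[OF ps])
  have eq: "\<And>\<omega>. (\<Prod>k\<in>I. h k (\<omega> k)) = F (\<omega> i)"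
  proof -
    fix \<omega> :: "nat \<Rightarrow> 'a"
    have "(\<Prod>k\<in>I. h k (\<omega> k)) = (\<Prod>k\<in>I. (if k = i then F (\<omega> i) else (1::real)))"
      by (intro prod.cong) (auto simp: h_def prob_space.prob_space[OF ps])
    also have "\<dots> = F (\<omega> i)" using assms finI by (intro prod_one) auto
    finally show "(\<Prod>k\<in>I. h k (\<omega> k)) = F (\<omega> i)" .
  qed
  show "integrable (PiM I M) (\<lambda>\<omega>. F (\<omega> i))"
    using product_integrable_prod[OF finI hi] by (simp add: eq)
  have "(\<Prod>k\<in>I. integral\<^sup>L (M k) (h k)) = (\<Prod>k\<in>I. (if k = i then integral\<^sup>L (M i) F else (1::real)))"
    by (intro prod.cong) (auto simp: h_def prob_space.prob_space[OF ps])
  also have "\<dots> = integral\<^sup>L (M i) F" using assms finI by (intro prod_one) auto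
  finally show "integral\<^sup>L (PiM I M) (\<lambda>\<omega>. F (\<omega> i)) = integral\<^sup>L (M i) F"
    using product_integral_prod[OF finI hi] by (simp add: eq)
qed

lemma PiM_sq_sum:
  fixes w :: "nat \<Rightarrow> 'a \<Rightarrow> real"
  assumes w1: "\<And>i. i \<in> I \<Longrightarrow> integrable (M i) (w i)"
    and w2: "\<And>i. i \<in> I \<Longrightarrow> integrable (M i) (\<lambda>x. (w i x)^2)"
  shows "integrable (PiM I M) (\<lambda>\<omega>. (\<Sum>i\<in>I. w i (\<omega> i))^2)"
    "integral\<^sup>L (PiM I M) (\<lambda>\<omega>. (\<Sum>i\<in>I. w i (\<omega> i))^2) =
       (\<Sum>i\<in>I. integral\<^sup>L (M i) (\<lambda>x. (w i x)^2) - (integral\<^sup>L (M i) (w i))^2)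
       + (\<Sum>i\<in>I. integral\<^sup>L (M i) (w i))^2"
proof -
  have sq: "\<And>\<omega>. (\<Sum>i\<in>I. w i (\<omega> i))^2 = (\<Sum>i\<in>I. \<Sum>j\<in>I. w i (\<omega> i) * w j (\<omega> j))"
    by (simp add: power2_eq_square sum_product)
  have ij: "\<And>i j. i \<in> I \<Longrightarrow> j \<in> I \<Longrightarrow> integrable (PiM I M) (\<lambda>\<omega>. w i (\<omega> i) * w j (\<omega> j)) \<and>
      integral\<^sup>L (PiM I M) (\<lambda>\<omega>. w i (\<omega> i) * w j (\<omega> j)) =
      integral\<^sup>L (M i) (w i) * integral\<^sup>L (M j) (w j) +
      (if i = j then integral\<^sup>L (M i) (\<lambda>x. (w i x)^2) - (integral\<^sup>L (M i) (w i))^2 else 0)"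
  proof -
    fix i j assume i: "i \<in> I" and j: "j \<in> I"
    show "?thesis i j"
    proof (cases "i = j")
      case True
      have e: "\<And>\<omega>. w i (\<omega> i) * w j (\<omega> j) = (\<lambda>x. (w i x)^2) (\<omega> i)"
        using True by (simp add: power2_eq_square)
      show ?thesis unfolding e using PiM_one[OF i w2[OF i]] True by (simp add: power2_eq_square)
    next
      case False
      show ?thesis using PiM_two[OF i j False w1[OF i] w1[OF j]] False by simp
    qed
  qed
  have int_ij: "\<And>i j. i\<in>I \<Longrightarrow> j\<in>I \<Longrightarrow> integrable (PiM I M) (\<lambda>\<omega>. w i (\<omega> i) * w j (\<omega> j))"
    using ij by blast
  have int_s: "integrable (PiM I M) (\<lambda>\<omega>. \<Sum>i\<in>I. \<Sum>j\<in>I. w i (\<omega> i) * w j (\<omega> j))"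
    by (auto intro!: integrable_sum int_ij)
  then show "integrable (PiM I M) (\<lambda>\<omega>. (\<Sum>i\<in>I. w i (\<omega> i))^2)"
    unfolding sq .
  have "integral\<^sup>L (PiM I M) (\<lambda>\<omega>. (\<Sum>i\<in>I. w i (\<omega> i))^2) =
     (\<Sum>i\<in>I. \<Sum>j\<in>I. integral\<^sup>L (PiM I M) (\<lambda>\<omega>. w i (\<omega> i) * w j (\<omega> j)))"
    unfolding sq by (simp add: integral_sum integrable_sum int_ij)
  also have "\<dots> = (\<Sum>i\<in>I. \<Sum>j\<in>I. integral\<^sup>L (M i) (w i) * integral\<^sup>L (M j) (w j) +
      (if i = j then integral\<^sup>L (M i) (\<lambda>x. (w i x)^2) - (integral\<^sup>L (M i) (w i))^2 else 0))"
    using ij by (intro sum.cong) auto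
  also have "\<dots> = (\<Sum>i\<in>I. integral\<^sup>L (M i) (\<lambda>x. (w i x)^2) - (integral\<^sup>L (M i) (w i))^2)
       + (\<Sum>i\<in>I. integral\<^sup>L (M i) (w i))^2"
    using finI by (subst sum_sq_aux) (auto simp: add.commute)
  finally show "integral\<^sup>L (PiM I M) (\<lambda>\<omega>. (\<Sum>i\<in>I. w i (\<omega> i))^2) =
       (\<Sum>i\<in>I. integral\<^sup>L (M i) (\<lambda>x. (w i x)^2) - (integral\<^sup>L (M i) (w i))^2)
       + (\<Sum>i\<in>I. integral\<^sup>L (M i) (w i))^2" .
qed

end

lemma var_shift:
  fixes f :: "'a \<Rightarrow> real"
  assumes "prob_space M" "integrable M f" "integrable M (\<lambda>x. (f x)^2)"
  shows "integrable M (\<lambda>x. (f x - d)^2)"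
    "integral\<^sup>L M (\<lambda>x. (f x - d)^2) - (integral\<^sup>L M (\<lambda>x. f x - d))^2 \<le> integral\<^sup>L M (\<lambda>x. (f x - c)^2)"
proof -
  interpret prob_space M by fact
  have ex: "\<And>e. (\<lambda>x. (f x - e)^2) = (\<lambda>x. (f x)^2 - 2*e*f x + e^2)"
    by (rule ext) (simp add: power2_eq_square algebra_simps)
  have ie: "\<And>e. integrable M (\<lambda>x. (f x)^2 - 2*e*f x + e^2)"
    using assms by (intro Bochner_Integration.integrable_add Bochner_Integration.integrable_diff
          integrable_mult_right integrable_const) auto
  have ve: "\<And>e. integral\<^sup>L M (\<lambda>x. (f x - e)^2) = integral\<^sup>L M (\<lambda>x. (f x)^2) - 2*e*integral\<^sup>L M f + e^2"
    unfolding ex using assms prob_space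
    by (subst Bochner_Integration.integral_add Bochner_Integration.integral_diff; (intro ie Bochner_Integration.integrable_diff integrable_mult_right integrable_const)?; auto)+
  show "integrable M (\<lambda>x. (f x - d)^2)" unfolding ex by (rule ie)
  have m: "integral\<^sup>L M (\<lambda>x. f x - d) = integral\<^sup>L M f - d"
    using assms prob_space by (subst Bochner_Integration.integral_diff) auto
  have "0 \<le> (integral\<^sup>L M f - c)^2" by simp
  then show "integral\<^sup>L M (\<lambda>x. (f x - d)^2) - (integral\<^sup>L M (\<lambda>x. f x - d))^2 \<le> integral\<^sup>L M (\<lambda>x. (f x - c)^2)"
    unfolding ve m by (simp add: power2_eq_square algebra_simps)
qed

lemma V_le:
  fixes m M \<sigma> :: real
  assumes "\<bar>m\<bar> \<le> M" "1 \<le> M"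
  shows "m^2 \<le> M^2" "m^4 \<le> M^4" "4*m^2*\<sigma>^2 + 2*\<sigma>^4 \<le> (4*\<sigma>^2 + 2*\<sigma>^4) * M^2"
proof -
  show m2: "m^2 \<le> M^2" using power_mono[of "\<bar>m\<bar>" M 2] assms by simp
  show "m^4 \<le> M^4" using power_mono[of "\<bar>m\<bar>" M 4] assms by (simp add: power_even_abs)
  have "1 \<le> M^2" using assms by (simp add: one_le_power)
  then have a: "1 * \<sigma>^4 \<le> M^2 * \<sigma>^4" by (intro mult_right_mono) auto
  have b: "m^2 * \<sigma>^2 \<le> M^2 * \<sigma>^2" using m2 by (intro mult_right_mono) auto
  show "4*m^2*\<sigma>^2 + 2*\<sigma>^4 \<le> (4*\<sigma>^2 + 2*\<sigma>^4) * M^2"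
    using a b by (simp add: algebra_simps)
qed


context
  fixes \<sigma> :: real and n :: nat
  assumes s: "0 < \<sigma>" and n: "0 < n"
begin

definition "Gc = sqrt 2 * (9*\<sigma>^4 + 1)"
definition "Kc = \<sigma>^2 * (tau n + 1)"
definition "Rc = 4*\<sigma>^2 + 2*\<sigma>^4"
definition "wfn m t p = thr_term n \<sigma> p - eta n \<sigma> - m^2*t^2"
definition "azero = integral\<^sup>L (Nd 0 \<sigma>) (\<lambda>x. Af \<sigma> x * ind n \<sigma> x)"

lemma azero_bound: "\<bar>azero\<bar> \<le> Gc / real n"
  unfolding azero_def Gc_def using Nd_a0[OF s n] by simp

lemma eta_eq: "eta n \<sigma> = - ((azero)^2)"
  unfolding eta_def azero_def using pair_thr(2)[OF s n, of 0 0] by (simp add: power2_eq_square)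

lemma Kc_nonneg: "0 \<le> Kc"
  unfolding Kc_def using tau_nonneg[OF n] by simp

lemma coord:
  fixes m t M :: real
  assumes mM: "\<bar>m\<bar> \<le> M" and tM: "\<bar>t\<bar> \<le> M" and M1: "1 \<le> M"
  defines "P \<equiv> gauss_pair m t \<sigma>"
  shows "integrable P (wfn m t)" "integrable P (\<lambda>p. (wfn m t p)^2)"
    "m = 0 \<and> t = 0 \<Longrightarrow> integral\<^sup>L P (wfn m t) = 0"
    "m = 0 \<and> t = 0 \<Longrightarrow> integral\<^sup>L P (\<lambda>p. (wfn m t p)^2) - (integral\<^sup>L P (wfn m t))^2 \<le> 4 * \<sigma>^4 * Gc / real n"
    "m = 0 \<or> t = 0 \<Longrightarrow> \<bar>integral\<^sup>L P (wfn m t)\<bar> \<le> (Gc / real n)^2 + Kc * (Gc / real n)"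
    "m = 0 \<or> t = 0 \<Longrightarrow> integral\<^sup>L P (\<lambda>p. (wfn m t p)^2) - (integral\<^sup>L P (wfn m t))^2 \<le> 2 * \<sigma>^4 * (1 + Rc) * M^4"
    "\<bar>integral\<^sup>L P (wfn m t)\<bar> \<le> (Gc / real n)^2 + Kc^2"
    "integral\<^sup>L P (\<lambda>p. (wfn m t p)^2) - (integral\<^sup>L P (wfn m t))^2 \<le> 2 * (2*Rc + Rc^2) * M^6 + 2 * Kc^4"
proof -
  interpret prob_space P unfolding P_def by (rule ps_pair[OF s n])
  have pP: "prob_space P" by (rule prob_space_axioms)
  have it: "integrable P (thr_term n \<sigma>)" unfolding P_def by (rule pair_thr(1)[OF s n])
  have it2: "integrable P (\<lambda>p. (thr_term n \<sigma> p)^2)" unfolding P_def by (rule pair_thr2(1)[OF s n])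
  have wfn_eq: "wfn m t = (\<lambda>p. thr_term n \<sigma> p - (eta n \<sigma> + m^2*t^2))"
    by (rule ext) (simp add: wfn_def)
  show iw: "integrable P (wfn m t)" unfolding wfn_eq
    by (intro Bochner_Integration.integrable_diff it integrable_const)
  show iw2: "integrable P (\<lambda>p. (wfn m t p)^2)" unfolding wfn_eq
    by (rule var_shift(1)[OF pP it it2])
  have vs: "\<And>c. integral\<^sup>L P (\<lambda>p. (wfn m t p)^2) - (integral\<^sup>L P (wfn m t))^2 \<le> integral\<^sup>L P (\<lambda>p. (thr_term n \<sigma> p - c)^2)"
    unfolding wfn_eq by (rule var_shift(2)[OF pP it it2])
  define am where "am = integral\<^sup>L (Nd m \<sigma>) (\<lambda>x. Af \<sigma> x * ind n \<sigma> x)"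
  define aT where "aT = integral\<^sup>L (Nd t \<sigma>) (\<lambda>x. Af \<sigma> x * ind n \<sigma> x)"
  have Ew: "integral\<^sup>L P (wfn m t) = (azero)^2 - am * aT"
  proof -
    have "integral\<^sup>L P (wfn m t) = integral\<^sup>L P (thr_term n \<sigma>) - (eta n \<sigma> + m^2*t^2)"
      unfolding wfn_eq using prob_space by (subst Bochner_Integration.integral_diff[OF it]) auto
    also have "\<dots> = (azero)^2 - am * aT"
      unfolding P_def pair_thr(2)[OF s n] eta_eq am_def aT_def by simp
    finally show ?thesis .
  qed
  have amK: "\<bar>am\<bar> \<le> Kc" unfolding am_def Kc_def by (rule Nd_Af_ind_bound[OF s n])
  have atK: "\<bar>aT\<bar> \<le> Kc" unfolding aT_def Kc_def by (rule Nd_Af_ind_bound[OF s n])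
  have G0: "0 \<le> Gc / real n" unfolding Gc_def by simp
  have azerosq: "(azero)^2 \<le> (Gc / real n)^2"
    using azero_bound power_mono[of "\<bar>azero\<bar>" "Gc / real n" 2] by simp
  show "m = 0 \<and> t = 0 \<Longrightarrow> integral\<^sup>L P (wfn m t) = 0"
    unfolding Ew am_def aT_def azero_def by (simp add: power2_eq_square)
  show "\<bar>integral\<^sup>L P (wfn m t)\<bar> \<le> (Gc / real n)^2 + Kc^2"
  proof -
    have "\<bar>am * aT\<bar> \<le> Kc * Kc" unfolding abs_mult
      using amK atK Kc_nonneg by (intro mult_mono) auto
    moreover have "0 \<le> (azero)^2" by simp
    ultimately show ?thesis unfolding Ew using azerosq unfolding abs_le_iff power2_eq_square[of Kc] by linarith
  qed
  show "m = 0 \<or> t = 0 \<Longrightarrow> \<bar>integral\<^sup>L P (wfn m t)\<bar> \<le> (Gc / real n)^2 + Kc * (Gc / real n)"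
  proof -
    assume "m = 0 \<or> t = 0"
    then have "\<bar>am * aT\<bar> \<le> Kc * (Gc / real n)"
    proof
      assume "m = 0"
      then have "\<bar>am\<bar> \<le> Gc / real n" using azero_bound unfolding am_def azero_def by simp
      then show ?thesis unfolding abs_mult using atK Kc_nonneg
        by (subst mult.commute) (intro mult_mono, auto)
    next
      assume "t = 0"
      then have "\<bar>aT\<bar> \<le> Gc / real n" using azero_bound unfolding aT_def azero_def by simp
      then show ?thesis unfolding abs_mult using amK Kc_nonneg G0
        by (intro mult_mono) auto
    qed
    moreover have "0 \<le> (azero)^2" by simp
    ultimately show ?thesis unfolding Ew using azerosq unfolding abs_le_iff by linarith
  qed
  show "m = 0 \<and> t = 0 \<Longrightarrow> integral\<^sup>L P (\<lambda>p. (wfn m t p)^2) - (integral\<^sup>L P (wfn m t))^2 \<le> 4 * \<sigma>^4 * Gc / real n"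
  proof -
    assume "m = 0 \<and> t = 0"
    then have "integral\<^sup>L P (\<lambda>p. (thr_term n \<sigma> p - 0)^2) \<le> 4 * \<sigma>^4 * Gc / real n"
      unfolding P_def Gc_def using pair_null[OF s n] by simp
    then show ?thesis using vs[of 0] by linarith
  qed
  have Vm: "m^4 + 4*m^2*\<sigma>^2 + 2*\<sigma>^4 \<le> M^4 + Rc * M^2"
    using V_le(2)[OF mM M1] V_le(3)[OF mM M1, of \<sigma>] unfolding Rc_def by linarith
  have Vt: "t^4 + 4*t^2*\<sigma>^2 + 2*\<sigma>^4 \<le> M^4 + Rc * M^2"
    using V_le(2)[OF tM M1] V_le(3)[OF tM M1, of \<sigma>] unfolding Rc_def by linarith
  have M24: "M^2 \<le> M^4" using M1 by (simp add: power_increasing)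
  have M46: "M^4 \<le> M^6" using M1 by (simp add: power_increasing)
  have R0: "0 \<le> Rc" unfolding Rc_def by simp
  have V1: "M^4 + Rc * M^2 \<le> (1 + Rc) * M^4"
    using mult_left_mono[OF M24 R0] by (simp add: algebra_simps)
  show "m = 0 \<or> t = 0 \<Longrightarrow> integral\<^sup>L P (\<lambda>p. (wfn m t p)^2) - (integral\<^sup>L P (wfn m t))^2 \<le> 2 * \<sigma>^4 * (1 + Rc) * M^4"
  proof -
    assume mt: "m = 0 \<or> t = 0"
    have "integral\<^sup>L P (\<lambda>p. (thr_term n \<sigma> p)^2) \<le> (m^4 + 4*m^2*\<sigma>^2 + 2*\<sigma>^4) * (t^4 + 4*t^2*\<sigma>^2 + 2*\<sigma>^4)"
      unfolding P_def by (rule pair_thr2(2)[OF s n])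
    also have "\<dots> \<le> 2 * \<sigma>^4 * (1 + Rc) * M^4"
      using mt
    proof
      assume m0: "m = 0"
      have "2*\<sigma>^4 * (t^4 + 4*t^2*\<sigma>^2 + 2*\<sigma>^4) \<le> 2*\<sigma>^4 * ((1 + Rc) * M^4)"
        using Vt V1 by (intro mult_left_mono) auto
      then show ?thesis using m0 by (simp add: mult.assoc)
    next
      assume t0: "t = 0"
      have "2*\<sigma>^4 * (m^4 + 4*m^2*\<sigma>^2 + 2*\<sigma>^4) \<le> 2*\<sigma>^4 * ((1 + Rc) * M^4)"
        using Vm V1 by (intro mult_left_mono) auto
      then show ?thesis using t0 by (simp add: ac_simps)
    qed
    finally show ?thesis using vs[of 0] by simp
  qed
  show "integral\<^sup>L P (\<lambda>p. (wfn m t p)^2) - (integral\<^sup>L P (wfn m t))^2 \<le> 2 * (2*Rc + Rc^2) * M^6 + 2 * Kc^4"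
  proof -
    define rm where "rm = 4*m^2*\<sigma>^2 + 2*\<sigma>^4"
    define rt where "rt = 4*t^2*\<sigma>^2 + 2*\<sigma>^4"
    have rm: "0 \<le> rm" "rm \<le> Rc * M^2" unfolding rm_def Rc_def using V_le(3)[OF mM M1, of \<sigma>] by auto
    have rt: "0 \<le> rt" "rt \<le> Rc * M^2" unfolding rt_def Rc_def using V_le(3)[OF tM M1, of \<sigma>] by auto
    have m4: "0 \<le> m^4" "m^4 \<le> M^4" using V_le[OF mM M1] by auto
    have t4: "0 \<le> t^4" "t^4 \<le> M^4" using V_le[OF tM M1] by auto
    have "(m^4 + rm) * (t^4 + rt) - m^4*t^4 = m^4 * rt + rm * t^4 + rm * rt"
      by (simp add: algebra_simps)
    also have "\<dots> \<le> M^4 * (Rc * M^2) + (Rc * M^2) * M^4 + (Rc * M^2) * (Rc * M^2)"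
      using m4 t4 rm rt by (intro add_mono mult_mono) auto
    also have "\<dots> = 2 * Rc * M^6 + Rc^2 * M^4"
      by (simp add: power2_eq_square power4_eq_xxxx algebra_simps numeral_eq_Suc)
    also have "\<dots> \<le> 2 * Rc * M^6 + Rc^2 * M^6"
      using M46 R0 by (intro add_mono mult_left_mono) auto
    finally have X: "(m^4 + rm) * (t^4 + rt) - m^4*t^4 \<le> (2*Rc + Rc^2) * M^6" by (simp add: algebra_simps)
    have "integral\<^sup>L P (\<lambda>p. (thr_term n \<sigma> p - m^2*t^2)^2) \<le>
       2 * ((m^4 + rm) * (t^4 + rt) - m^4*t^4) + 2 * Kc^4"
      unfolding P_def rm_def rt_def Kc_def using pair_var(2)[OF s n, of m t] by (simp add: add.assoc)
    also have "\<dots> \<le> 2 * (2*Rc + Rc^2) * M^6 + 2 * Kc^4" unfolding mult.assoc[of 2 "2*Rc + Rc^2"] by (intro add_right_mono mult_left_mono X) simp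
    finally show ?thesis using vs[of "m^2*t^2"] by linarith
  qed
qed

end

lemma sq_sum_le: "((x::real) + y)^2 \<le> 2*x^2 + 2*y^2"
proof -
  have "0 \<le> (x - y)^2" by simp
  then show ?thesis by (simp add: power2_eq_square algebra_simps)
qed

lemma final_arith:
  fixes nr L p q M s1 s2 G \<sigma> K :: real
  assumes nr: "1 \<le> nr" and L1: "1 \<le> L" and L2: "L^2 \<le> 4*nr" and p1: "1 \<le> p" and pn: "p \<le> nr"
    and q1: "1 \<le> q" and M1: "1 \<le> M" and s1: "0 \<le> s1" "s1 \<le> 2*p" and s2: "0 \<le> s2" "s2 \<le> q"
    and G: "0 \<le> G" and s: "0 < \<sigma>" and K: "0 \<le> K" "K \<le> 5*\<sigma>^2*L"
  shows "4*\<sigma>^4*G + s1 * (2*\<sigma>^4*(1 + (4*\<sigma>^2 + 2*\<sigma>^4))*M^4)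
     + s2 * (2*(2*(4*\<sigma>^2 + 2*\<sigma>^4) + (4*\<sigma>^2 + 2*\<sigma>^4)^2)*M^6 + 2*K^4)
     + (s1 * ((G/nr)^2 + K*(G/nr)) + s2 * ((G/nr)^2 + K^2))^2
   \<le> (4*\<sigma>^4*G + 4*\<sigma>^4*(1 + (4*\<sigma>^2 + 2*\<sigma>^4)) + 32*(G^2 + 5*\<sigma>^2*G)^2) * (p * M^4)
     + (2*(2*(4*\<sigma>^2 + 2*\<sigma>^4) + (4*\<sigma>^2 + 2*\<sigma>^4)^2)) * (q * M^6)
     + (1250*\<sigma>^8 + 2*(G^2 + 25*\<sigma>^4)^2) * (q^2 * L^4)"
proof -
  define R where "R = 4*\<sigma>^2 + 2*\<sigma>^4"
  define a where "a = G^2 + 5*\<sigma>^2*G"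
  have R0: "0 \<le> R" unfolding R_def by simp
  have a0: "0 \<le> a" unfolding a_def using G by simp
  have nr0: "0 < nr" using nr by simp
  have M4: "1 \<le> M^4" using M1 by (simp add: one_le_power)
  have M6: "1 \<le> M^6" using M1 by (simp add: one_le_power)
  have pM: "1 \<le> p * M^4"
  proof -
    have "1*1 \<le> p*M^4" by (rule mult_mono) (use p1 M4 in auto)
    then show ?thesis by simp
  qed
  have qq: "q \<le> q^2" using q1 by (simp add: power2_eq_square)
  have L4: "1 \<le> L^2" using L1 by (simp add: one_le_power)
  have t1: "4*\<sigma>^4*G \<le> 4*\<sigma>^4*G * (p * M^4)"
    using mult_left_mono[OF pM, of "4*\<sigma>^4*G"] G by simp
  have t2: "s1 * (2*\<sigma>^4*(1 + R)*M^4) \<le> 4*\<sigma>^4*(1 + R) * (p * M^4)"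
  proof -
    have "s1 * (2*\<sigma>^4*(1 + R)*M^4) \<le> (2*p) * (2*\<sigma>^4*(1 + R)*M^4)"
      using s1 R0 by (intro mult_right_mono) auto
    then show ?thesis by (simp add: algebra_simps)
  qed
  have K4: "K^4 \<le> 625*\<sigma>^8*L^4"
  proof -
    have "K^4 \<le> (5*\<sigma>^2*L)^4" using K by (intro power_mono) auto
    also have "\<dots> = 625*\<sigma>^8*L^4" by (simp add: power_mult_distrib flip: power_mult)
    finally show ?thesis .
  qed
  have t3: "s2 * (2*(2*R + R^2)*M^6 + 2*K^4) \<le> (2*(2*R + R^2)) * (q * M^6) + 1250*\<sigma>^8 * (q^2 * L^4)"
  proof -
    have "s2 * (2*(2*R + R^2)*M^6 + 2*K^4) \<le> q * (2*(2*R + R^2)*M^6 + 2*K^4)"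
      using s2 R0 by (intro mult_right_mono) auto
    also have "\<dots> = (2*(2*R + R^2)) * (q * M^6) + 2 * (q * K^4)" by (simp add: algebra_simps)
    also have "q * K^4 \<le> q^2 * (625*\<sigma>^8*L^4)"
      using q1 K4 qq by (intro mult_mono) auto
    finally show ?thesis by (simp add: algebra_simps)
  qed
  have e1: "(G/nr)^2 + K*(G/nr) \<le> a * L / nr"
  proof -
    have "(G/nr)^2 = G^2/nr/nr" by (simp add: power2_eq_square)
    also have "\<dots> \<le> G^2/nr" using nr G mult_right_mono[OF nr, of "G^2"] by (simp add: divide_le_eq field_simps)
    also have "\<dots> \<le> G^2*L/nr" using L1 nr0 G by (simp add: divide_right_mono mult_le_cancel_left1)
    finally have A: "(G/nr)^2 \<le> G^2*L/nr" .
    have "K*(G/nr) \<le> (5*\<sigma>^2*L)*(G/nr)" using K G nr0 by (intro mult_right_mono) auto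
    then have B: "K*(G/nr) \<le> 5*\<sigma>^2*G*L/nr" by (simp add: ac_simps)
    from A B show ?thesis unfolding a_def by (simp add: add_divide_distrib algebra_simps)
  qed
  have kg: "0 \<le> K*(G/nr)" using K G nr0 by simp
  have ae1: "s1 * ((G/nr)^2 + K*(G/nr)) \<le> 2*p*(a*L/nr)"
    using s1 e1 kg by (intro mult_mono) auto
  have ae1': "0 \<le> s1 * ((G/nr)^2 + K*(G/nr))" using s1 kg by simp
  have sq1: "(s1 * ((G/nr)^2 + K*(G/nr)))^2 \<le> 16*a^2 * (p * M^4)"
  proof -
    have "(s1 * ((G/nr)^2 + K*(G/nr)))^2 \<le> (2*p*(a*L/nr))^2"
      using ae1 ae1' by (intro power_mono) auto
    also have "\<dots> = 4*a^2*p^2*L^2/nr^2" by (simp add: power_mult_distrib power_divide)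
    also have "\<dots> \<le> 4*a^2*p^2*(4*nr)/nr^2"
      using L2 by (intro divide_right_mono mult_left_mono) auto
    also have "\<dots> = 16*a^2*(p*p/nr)" using nr0 by (simp add: power2_eq_square field_simps)
    also have "p*p/nr \<le> p" using pn p1 nr0 by (simp add: divide_le_eq mult_left_mono)
    then have "16*a^2*(p*p/nr) \<le> 16*a^2*p" by (intro mult_left_mono) auto
    also have "\<dots> \<le> 16*a^2*(p*M^4)" using M4 p1 by (intro mult_left_mono) (auto simp: mult_le_cancel_left1)
    finally show ?thesis .
  qed
  have e2: "(G/nr)^2 + K^2 \<le> (G^2 + 25*\<sigma>^4) * L^2"
  proof -
    have "(G/nr)^2 \<le> G^2" using nr G by (simp add: power_divide divide_le_eq mult_le_cancel_left1 one_le_power)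
    also have "\<dots> \<le> G^2 * L^2" using L4 by (simp add: mult_le_cancel_left1)
    finally have A: "(G/nr)^2 \<le> G^2 * L^2" .
    have "K^2 \<le> (5*\<sigma>^2*L)^2" using K by (intro power_mono) auto
    then have B: "K^2 \<le> 25*\<sigma>^4*L^2" by (simp add: power_mult_distrib flip: power_mult)
    from A B show ?thesis by (simp add: algebra_simps)
  qed
  have sq2: "(s2 * ((G/nr)^2 + K^2))^2 \<le> (G^2 + 25*\<sigma>^4)^2 * (q^2 * L^4)"
  proof -
    have "(s2 * ((G/nr)^2 + K^2))^2 \<le> (q * ((G^2 + 25*\<sigma>^4) * L^2))^2"
      using s2 e2 by (intro power_mono mult_mono) auto
    also have "\<dots> = (G^2 + 25*\<sigma>^4)^2 * (q^2 * L^4)" by (simp add: power_mult_distrib flip: power_mult)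
    finally show ?thesis .
  qed
  have t4: "(s1 * ((G/nr)^2 + K*(G/nr)) + s2 * ((G/nr)^2 + K^2))^2 \<le>
     2*(s1 * ((G/nr)^2 + K*(G/nr)))^2 + 2*(s2 * ((G/nr)^2 + K^2))^2"
    by (rule sq_sum_le)
  have rhs: "(4*\<sigma>^4*G + 4*\<sigma>^4*(1 + R) + 32*a^2) * (p * M^4)
     + (2*(2*R + R^2)) * (q * M^6)
     + (1250*\<sigma>^8 + 2*(G^2 + 25*\<sigma>^4)^2) * (q^2 * L^4) =
     4*\<sigma>^4*G * (p * M^4) + 4*\<sigma>^4*(1 + R) * (p * M^4) + 2 * (16*a^2 * (p * M^4))
     + (2*(2*R + R^2)) * (q * M^6)
     + 1250*\<sigma>^8 * (q^2 * L^4) + 2 * ((G^2 + 25*\<sigma>^4)^2 * (q^2 * L^4))"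
    by (simp only: distrib_right mult.assoc)
  have "4*\<sigma>^4*G + s1 * (2*\<sigma>^4*(1 + R)*M^4) + s2 * (2*(2*R + R^2)*M^6 + 2*K^4)
     + (s1 * ((G/nr)^2 + K*(G/nr)) + s2 * ((G/nr)^2 + K^2))^2 \<le>
     (4*\<sigma>^4*G + 4*\<sigma>^4*(1 + R) + 32*a^2) * (p * M^4)
     + (2*(2*R + R^2)) * (q * M^6)
     + (1250*\<sigma>^8 + 2*(G^2 + 25*\<sigma>^4)^2) * (q^2 * L^4)"
    unfolding rhs using t1 t2 t3 t4 sq1 sq2 by linarith
  then show ?thesis unfolding R_def a_def .
qed

lemma sum_if_card:
  fixes c :: real
  assumes "finite A"
  shows "(\<Sum>i\<in>A. if P i then c else 0) = c * real (card {i\<in>A. P i})"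
proof -
  have "(\<Sum>i\<in>A. if P i then c else 0) = (\<Sum>i\<in>{i\<in>A. P i}. c)"
    using sum.inter_filter[OF assms, of "\<lambda>_. c" P] by simp
  then show ?thesis by (simp add: mult.commute)
qed

theorem theorem3:
  fixes \<beta> \<epsilon> b \<sigma> :: real
  assumes "0 < \<epsilon>" and "\<epsilon> \<le> \<beta>" and "\<beta> < 1/2" and "0 < b" and "0 < \<sigma>"
  shows "\<exists>C>0. \<exists>N. \<forall>n\<ge>N. \<forall>\<mu> \<theta>. (\<mu>, \<theta>) \<in> Omega n \<beta> \<epsilon> b \<longrightarrow>
           (\<integral>\<^sup>+ \<omega>. ennreal ((Q4hat n \<sigma> \<omega> - Qfun n \<mu> \<theta>)^2) \<partial>(sample_law n \<mu> \<theta> \<sigma>))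
             \<le> ennreal (C * Max {real n powr (2*\<epsilon> - 2) * (ln (real n))^4,
                                  real n powr (\<epsilon> + 6*b - 2),
                                  real n powr (\<beta> + 4*b - 2)})"
proof -
  note s = \<open>0 < \<sigma>\<close>
  define G where "G = sqrt 2 * (9*\<sigma>^4 + 1)"
  define R where "R = 4*\<sigma>^2 + 2*\<sigma>^4"
  define c3 where "c3 = 4*\<sigma>^4*G + 4*\<sigma>^4*(1 + (4*\<sigma>^2 + 2*\<sigma>^4)) + 32*(G^2 + 5*\<sigma>^2*G)^2"
  define c2 where "c2 = 2*(2*(4*\<sigma>^2 + 2*\<sigma>^4) + (4*\<sigma>^2 + 2*\<sigma>^4)^2)"
  define c1 where "c1 = 1250*\<sigma>^8 + 2*(G^2 + 25*\<sigma>^4)^2"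
  define C where "C = c1 + c2 + c3 + 1"
  have G0: "0 \<le> G" unfolding G_def by simp
  have c1: "0 \<le> c1" unfolding c1_def by simp
  have c2: "0 \<le> c2" unfolding c2_def by simp
  have c3: "0 \<le> c3" unfolding c3_def using G0 by simp
  have Cpos: "0 < C" unfolding C_def using c1 c2 c3 by simp
  have main: "(\<integral>\<^sup>+ \<omega>. ennreal ((Q4hat n \<sigma> \<omega> - Qfun n \<mu> \<theta>)^2) \<partial>(sample_law n \<mu> \<theta> \<sigma>))
             \<le> ennreal (C * Max {real n powr (2*\<epsilon> - 2) * (ln (real n))^4,
                                  real n powr (\<epsilon> + 6*b - 2),
                                  real n powr (\<beta> + 4*b - 2)})"
    if n3: "3 \<le> n" and om: "(\<mu>, \<theta>) \<in> Omega n \<beta> \<epsilon> b" for n \<mu> \<theta>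
  proof -
    have n: "0 < n" using n3 by simp
    define nr where "nr = real n"
    have nr3: "3 \<le> nr" unfolding nr_def using n3 by simp
    have nr0: "0 < nr" using nr3 by simp
    define M where "M = nr powr b"
    define p where "p = nr powr \<beta>"
    define q where "q = nr powr \<epsilon>"
    define L where "L = ln nr"
    have M1: "1 \<le> M" unfolding M_def using nr3 \<open>0 < b\<close> by (intro ge_one_powr_ge_zero) auto
    have p1: "1 \<le> p" unfolding p_def using nr3 \<open>0 < \<epsilon>\<close> \<open>\<epsilon> \<le> \<beta>\<close> by (intro ge_one_powr_ge_zero) auto
    have q1: "1 \<le> q" unfolding q_def using nr3 \<open>0 < \<epsilon>\<close> by (intro ge_one_powr_ge_zero) auto
    have pn: "p \<le> nr"
    proof -
      have "nr powr \<beta> \<le> nr powr 1" using nr3 \<open>\<beta> < 1/2\<close> by (intro powr_mono) auto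
      then show ?thesis unfolding p_def using nr0 by simp
    qed
    have L1: "1 \<le> L"
    proof -
      have "exp 1 \<le> nr" using e_less_272 nr3 by linarith
      then have "ln (exp 1) \<le> ln nr" using nr0 by (subst ln_le_cancel_iff) auto
      then show ?thesis unfolding L_def by simp
    qed
    have L2: "L^2 \<le> 4*nr"
    proof -
      have "ln (sqrt nr) \<le> sqrt nr - 1" using nr0 by (intro ln_le_minus_one) simp
      then have "L \<le> 2 * sqrt nr" unfolding L_def using nr0 by (simp add: ln_sqrt)
      then have "L^2 \<le> (2 * sqrt nr)^2" using L1 by (intro power_mono) auto
      then show ?thesis using nr0 by (simp add: power_mult_distrib)
    qed
    define K where "K = Kc \<sigma> n"
    have K0: "0 \<le> K" unfolding K_def using Kc_nonneg[OF s n] .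
    have K5: "K \<le> 5*\<sigma>^2*L"
    proof -
      have "tau n + 1 \<le> 5 * L" unfolding tau_def L_def nr_def[symmetric] using L1 L_def by simp
      then have "\<sigma>^2 * (tau n + 1) \<le> \<sigma>^2 * (5*L)" by (intro mult_left_mono) auto
      then show ?thesis unfolding K_def Kc_def[OF s n] by simp
    qed
    have omd: "real (card {i. i < n \<and> \<mu> i \<noteq> 0}) \<le> p" "\<forall>i<n. \<bar>\<mu> i\<bar> \<le> M"
       "real (card {i. i < n \<and> \<theta> i \<noteq> 0}) \<le> p" "\<forall>i<n. \<bar>\<theta> i\<bar> \<le> M"
       "real (card {i. i < n \<and> \<mu> i * \<theta> i \<noteq> 0}) \<le> q"
      using om unfolding Omega_def p_def q_def M_def nr_def by auto
    have GG: "Gc \<sigma> = G" unfolding Gc_def[OF s n] G_def ..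
    have RR: "Rc \<sigma> = R" unfolding Rc_def[OF s n] R_def ..
    define Mi where "Mi = (\<lambda>i. gauss_pair (\<mu> i) (\<theta> i) \<sigma>)"
    define w where "w = (\<lambda>i. wfn \<sigma> n (\<mu> i) (\<theta> i))"
    have psM: "\<And>i. prob_space (Mi i)" unfolding Mi_def by (rule ps_pair[OF s n])
    have law: "sample_law n \<mu> \<theta> \<sigma> = PiM {..<n} Mi" unfolding sample_law_def Mi_def ..
    have mb: "\<And>i. i \<in> {..<n} \<Longrightarrow> \<bar>\<mu> i\<bar> \<le> M \<and> \<bar>\<theta> i\<bar> \<le> M" using omd by auto
    have w1: "\<And>i. i \<in> {..<n} \<Longrightarrow> integrable (Mi i) (w i)"
      unfolding Mi_def w_def using mb coord(1)[OF s n _ _ M1] by blast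
    have w2: "\<And>i. i \<in> {..<n} \<Longrightarrow> integrable (Mi i) (\<lambda>x. (w i x)^2)"
      unfolding Mi_def w_def using mb coord(2)[OF s n _ _ M1] by blast
    note SQ = PiM_sq_sum[where M=Mi and I="{..<n}" and w=w, OF psM finite_lessThan w1 w2]
    define Ew where "Ew = (\<lambda>i. integral\<^sup>L (Mi i) (w i))"
    define Vi where "Vi = (\<lambda>i. integral\<^sup>L (Mi i) (\<lambda>x. (w i x)^2) - (Ew i)^2)"
    define S1 where "S1 = {i\<in>{..<n}. \<not> (\<mu> i = 0 \<and> \<theta> i = 0) \<and> \<mu> i * \<theta> i = 0}"
    define S2 where "S2 = {i\<in>{..<n}. \<mu> i * \<theta> i \<noteq> 0}"
    define s1 where "s1 = real (card S1)"
    define s2 where "s2 = real (card S2)"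
    define v1 where "v1 = 2*\<sigma>^4*(1 + R)*M^4"
    define v2 where "v2 = 2*(2*R + R^2)*M^6 + 2*K^4"
    define e1 where "e1 = (G/nr)^2 + K*(G/nr)"
    define e2 where "e2 = (G/nr)^2 + K^2"
    have R0: "0 \<le> R" unfolding R_def by simp
    have v1p: "0 \<le> v1" unfolding v1_def using R0 M1 by simp
    have v2p: "0 \<le> v2" unfolding v2_def using R0 M1 K0 by simp
    have e1p: "0 \<le> e1" unfolding e1_def using G0 K0 nr0 by simp
    have e2p: "0 \<le> e2" unfolding e2_def by simp
    have b0: "0 \<le> 4*\<sigma>^4*G/nr" using G0 nr0 by simp
    have Vb: "Vi i \<le> 4*\<sigma>^4*G/nr + (if i \<in> S1 then v1 else 0) + (if i \<in> S2 then v2 else 0)"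
      and Eb: "\<bar>Ew i\<bar> \<le> (if i \<in> S1 then e1 else 0) + (if i \<in> S2 then e2 else 0)"
      if i: "i \<in> {..<n}" for i
    proof -
      have mi: "\<bar>\<mu> i\<bar> \<le> M" and ti: "\<bar>\<theta> i\<bar> \<le> M" using mb[OF i] by auto
      note cd = coord[OF s n mi ti M1, unfolded GG RR, folded K_def nr_def]
      have Vi': "Vi i = integral\<^sup>L (gauss_pair (\<mu> i) (\<theta> i) \<sigma>) (\<lambda>x. (wfn \<sigma> n (\<mu> i) (\<theta> i) x)^2) - (integral\<^sup>L (gauss_pair (\<mu> i) (\<theta> i) \<sigma>) (wfn \<sigma> n (\<mu> i) (\<theta> i)))^2"
        unfolding Vi_def Ew_def w_def Mi_def ..
      have Ew': "Ew i = integral\<^sup>L (gauss_pair (\<mu> i) (\<theta> i) \<sigma>) (wfn \<sigma> n (\<mu> i) (\<theta> i))"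
        unfolding Ew_def w_def Mi_def ..
      consider (z) "\<mu> i = 0 \<and> \<theta> i = 0" | (o) "\<not> (\<mu> i = 0 \<and> \<theta> i = 0)" "\<mu> i * \<theta> i = 0"
        | (t) "\<mu> i * \<theta> i \<noteq> 0" by blast
      then have "Vi i \<le> 4*\<sigma>^4*G/nr + (if i \<in> S1 then v1 else 0) + (if i \<in> S2 then v2 else 0) \<and>
         \<bar>Ew i\<bar> \<le> (if i \<in> S1 then e1 else 0) + (if i \<in> S2 then e2 else 0)"
      proof cases
        case z
        then have "i \<notin> S1" "i \<notin> S2" unfolding S1_def S2_def by auto
        then show ?thesis using cd(3)[OF z] cd(4)[OF z] unfolding Vi' Ew' by simp
      next
        case o
        then have "i \<in> S1" "i \<notin> S2" unfolding S1_def S2_def using i by auto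
        moreover have "\<mu> i = 0 \<or> \<theta> i = 0" using o by simp
        ultimately show ?thesis using cd(5) cd(6) b0 unfolding Vi' Ew' v1_def e1_def by simp
      next
        case t
        then have "i \<notin> S1" "i \<in> S2" unfolding S1_def S2_def using i by auto
        then show ?thesis using cd(7) cd(8) b0 unfolding Vi' Ew' v2_def e2_def by simp
      qed
      then show "Vi i \<le> 4*\<sigma>^4*G/nr + (if i \<in> S1 then v1 else 0) + (if i \<in> S2 then v2 else 0)"
        "\<bar>Ew i\<bar> \<le> (if i \<in> S1 then e1 else 0) + (if i \<in> S2 then e2 else 0)" by auto
    qed
    have S1s: "{i\<in>{..<n}. i \<in> S1} = S1" unfolding S1_def by auto
    have S2s: "{i\<in>{..<n}. i \<in> S2} = S2" unfolding S2_def by auto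
    have SV: "(\<Sum>i\<in>{..<n}. Vi i) \<le> 4*\<sigma>^4*G + s1 * v1 + s2 * v2"
    proof -
      have "(\<Sum>i\<in>{..<n}. Vi i) \<le> (\<Sum>i\<in>{..<n}. 4*\<sigma>^4*G/nr + (if i \<in> S1 then v1 else 0) + (if i \<in> S2 then v2 else 0))"
        by (rule sum_mono) (rule Vb)
      also have "\<dots> = real n * (4*\<sigma>^4*G/nr) + v1 * s1 + v2 * s2"
        unfolding sum.distrib sum_if_card[OF finite_lessThan] S1s S2s s1_def s2_def by simp
      also have "real n * (4*\<sigma>^4*G/nr) = 4*\<sigma>^4*G" unfolding nr_def using n by simp
      finally show ?thesis by (simp add: mult.commute)
    qed
    have SE: "\<bar>\<Sum>i\<in>{..<n}. Ew i\<bar> \<le> s1*e1 + s2*e2"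
    proof -
      have "\<bar>\<Sum>i\<in>{..<n}. Ew i\<bar> \<le> (\<Sum>i\<in>{..<n}. \<bar>Ew i\<bar>)" by (rule sum_abs)
      also have "\<dots> \<le> (\<Sum>i\<in>{..<n}. (if i \<in> S1 then e1 else 0) + (if i \<in> S2 then e2 else 0))"
        by (rule sum_mono) (rule Eb)
      also have "\<dots> = e1 * s1 + e2 * s2"
        unfolding sum.distrib sum_if_card[OF finite_lessThan] S1s S2s s1_def s2_def by simp
      finally show ?thesis by (simp add: mult.commute)
    qed
    have SE2: "(\<Sum>i\<in>{..<n}. Ew i)^2 \<le> (s1*e1 + s2*e2)^2"
    proof -
      have "(\<bar>\<Sum>i\<in>{..<n}. Ew i\<bar>)^2 \<le> (s1*e1 + s2*e2)^2" using SE by (intro power_mono) auto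
      then show ?thesis by simp
    qed
    have s1p: "0 \<le> s1" and s2p: "0 \<le> s2" unfolding s1_def s2_def by auto
    have s1b: "s1 \<le> 2*p"
    proof -
      have "S1 \<subseteq> {i. i < n \<and> \<mu> i \<noteq> 0} \<union> {i. i < n \<and> \<theta> i \<noteq> 0}" unfolding S1_def by auto
      then have "card S1 \<le> card ({i. i < n \<and> \<mu> i \<noteq> 0} \<union> {i. i < n \<and> \<theta> i \<noteq> 0})"
        by (intro card_mono) auto
      also have "\<dots> \<le> card {i. i < n \<and> \<mu> i \<noteq> 0} + card {i. i < n \<and> \<theta> i \<noteq> 0}" by (rule card_Un_le)
      finally have "real (card S1) \<le> real (card {i. i < n \<and> \<mu> i \<noteq> 0}) + real (card {i. i < n \<and> \<theta> i \<noteq> 0})"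
        by linarith
      then show ?thesis unfolding s1_def using omd(1,3) by linarith
    qed
    have s2b: "s2 \<le> q"
    proof -
      have "S2 = {i. i < n \<and> \<mu> i * \<theta> i \<noteq> 0}" unfolding S2_def by auto
      then show ?thesis unfolding s2_def using omd(5) by simp
    qed
    have intS: "integral\<^sup>L (PiM {..<n} Mi) (\<lambda>\<omega>. (\<Sum>i\<in>{..<n}. w i (\<omega> i))^2) \<le> c3*(p*M^4) + c2*(q*M^6) + c1*(q^2*L^4)"
    proof -
      have "integral\<^sup>L (PiM {..<n} Mi) (\<lambda>\<omega>. (\<Sum>i\<in>{..<n}. w i (\<omega> i))^2) = (\<Sum>i\<in>{..<n}. Vi i) + (\<Sum>i\<in>{..<n}. Ew i)^2"
        unfolding Vi_def Ew_def by (rule SQ(2))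
      also have "\<dots> \<le> 4*\<sigma>^4*G + s1 * v1 + s2 * v2 + (s1*e1 + s2*e2)^2" using SV SE2 by linarith
      also have "\<dots> \<le> c3*(p*M^4) + c2*(q*M^6) + c1*(q^2*L^4)"
        using final_arith[OF _ L1 L2 p1 pn q1 M1 s1p s1b s2p s2b G0 s K0 K5] nr3
        unfolding c1_def c2_def c3_def v1_def v2_def e1_def e2_def R_def by simp
      finally show ?thesis .
    qed
    have X3: "p*M^4 = nr powr (\<beta> + 4*b)" unfolding p_def M_def using nr0
      by (simp add: powr_power powr_add)
    have X2: "q*M^6 = nr powr (\<epsilon> + 6*b)" unfolding q_def M_def using nr0
      by (simp add: powr_power powr_add)
    have X1: "q^2 = nr powr (2*\<epsilon>)" unfolding q_def using nr0
      by (simp add: powr_power)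
    have d2: "\<And>a. nr powr (a - 2) = nr powr a / nr^2" using nr0 by (simp add: powr_diff)
    define Y where "Y = Max {real n powr (2*\<epsilon> - 2) * (ln (real n))^4,
                                  real n powr (\<epsilon> + 6*b - 2),
                                  real n powr (\<beta> + 4*b - 2)}"
    have y1: "q^2*L^4/nr^2 \<le> Y"
    proof -
      have "q^2*L^4/nr^2 = real n powr (2*\<epsilon> - 2) * (ln (real n))^4" unfolding X1 L_def nr_def using d2[of "2*\<epsilon>", unfolded nr_def] by simp
      moreover have "real n powr (2*\<epsilon> - 2) * (ln (real n))^4 \<le> Y" unfolding Y_def by (rule Max_ge) auto
      ultimately show ?thesis by simp
    qed
    have y2: "q*M^6/nr^2 \<le> Y"
    proof -
      have "q*M^6/nr^2 = real n powr (\<epsilon> + 6*b - 2)" unfolding X2 nr_def using d2[of "\<epsilon> + 6*b", unfolded nr_def] by (simp add: algebra_simps)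
      moreover have "real n powr (\<epsilon> + 6*b - 2) \<le> Y" unfolding Y_def by (rule Max_ge) auto
      ultimately show ?thesis by simp
    qed
    have y3: "p*M^4/nr^2 \<le> Y"
    proof -
      have "p*M^4/nr^2 = real n powr (\<beta> + 4*b - 2)" unfolding X3 nr_def using d2[of "\<beta> + 4*b", unfolded nr_def] by (simp add: algebra_simps)
      moreover have "real n powr (\<beta> + 4*b - 2) \<le> Y" unfolding Y_def by (rule Max_ge) auto
      ultimately show ?thesis by simp
    qed
    have Y0: "0 \<le> Y" using y3 nr0 p1 M1 by (smt (verit) divide_nonneg_pos mult_nonneg_nonneg zero_le_power zero_less_power)
    have fin: "(1/nr)^2 * integral\<^sup>L (PiM {..<n} Mi) (\<lambda>\<omega>. (\<Sum>i\<in>{..<n}. w i (\<omega> i))^2) \<le> C * Y"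
    proof -
      have "(1/nr)^2 * integral\<^sup>L (PiM {..<n} Mi) (\<lambda>\<omega>. (\<Sum>i\<in>{..<n}. w i (\<omega> i))^2) \<le>
          (1/nr)^2 * (c3*(p*M^4) + c2*(q*M^6) + c1*(q^2*L^4))"
        using intS by (intro mult_left_mono) auto
      also have "\<dots> = c3*(p*M^4/nr^2) + c2*(q*M^6/nr^2) + c1*(q^2*L^4/nr^2)"
        by (simp add: power_divide algebra_simps)
      also have "\<dots> \<le> c3*Y + c2*Y + c1*Y"
        using y1 y2 y3 c1 c2 c3 by (intro add_mono mult_left_mono) auto
      also have "\<dots> \<le> C*Y" unfolding C_def using Y0 by (simp add: algebra_simps)
      finally show ?thesis .
    qed
    have eqfun: "(Q4hat n \<sigma> \<omega> - Qfun n \<mu> \<theta>)^2 = (1/nr)^2 * (\<Sum>i\<in>{..<n}. w i (\<omega> i))^2" for \<omega>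
    proof -
      have "Q4hat n \<sigma> \<omega> - Qfun n \<mu> \<theta> = (1/nr) * ((\<Sum>i<n. thr_term n \<sigma> (\<omega> i) - eta n \<sigma>) - (\<Sum>i<n. (\<mu> i)^2 * (\<theta> i)^2))"
        unfolding Q4hat_def Qfun_def nr_def by (simp add: algebra_simps)
      also have "(\<Sum>i<n. thr_term n \<sigma> (\<omega> i) - eta n \<sigma>) - (\<Sum>i<n. (\<mu> i)^2 * (\<theta> i)^2) = (\<Sum>i\<in>{..<n}. w i (\<omega> i))"
        unfolding w_def wfn_def[OF s n] by (simp add: sum_subtractf)
      finally show ?thesis by (simp add: power_mult_distrib power_divide)
    qed
    have "(\<integral>\<^sup>+ \<omega>. ennreal ((Q4hat n \<sigma> \<omega> - Qfun n \<mu> \<theta>)^2) \<partial>(sample_law n \<mu> \<theta> \<sigma>)) =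
        (\<integral>\<^sup>+ \<omega>. ennreal ((1/nr)^2 * (\<Sum>i\<in>{..<n}. w i (\<omega> i))^2) \<partial>(PiM {..<n} Mi))"
      unfolding law eqfun ..
    also have "\<dots> = ennreal (integral\<^sup>L (PiM {..<n} Mi) (\<lambda>\<omega>. (1/nr)^2 * (\<Sum>i\<in>{..<n}. w i (\<omega> i))^2))"
      by (rule nn_integral_eq_integral) (use SQ(1) in auto)
    also have "\<dots> = ennreal ((1/nr)^2 * integral\<^sup>L (PiM {..<n} Mi) (\<lambda>\<omega>. (\<Sum>i\<in>{..<n}. w i (\<omega> i))^2))"
      by simp
    also have "\<dots> \<le> ennreal (C * Y)" using fin by (rule ennreal_leI)
    finally show ?thesis unfolding Y_def .
  qed
  show ?thesis
    using Cpos main by (intro exI[of _ C] conjI exI[of _ 3]) auto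
qed

end
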